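(* Let $t\in\mathbb{N}$ and let $G$ be a $t$-circle-bounded colored graph. Then $\mathrm{Aut}(G)\in\Gamma_t$.
   Context: A colored graph is $G=(V,E,c)$ with $c\colon V\to[k]$; its automorphisms are the permutations of $V$ preserving both edges and colors, and $\mathrm{Aut}(G)$ is the group of these. For $i\in[k]$ let $V_i=\{v: c(v)=i\}$ and $V_{<i}=\bigcup_{j<i}V_j$. $G$ is $t$-circle-bounded if for every $i\in[k]$ and every $X\subseteq V_{<i}$ the induced subgraph $G_{i,X}:=G[\{v\in V_i \mid N(v)\cap V_{<i}=X\}]$ is the disjoint union of at most $t$ connected graphs each of maximum degree at most two. For $d\in\mathbb{N}$, $\Gamma_d$ is the class of finite groups all of whose non-abelian composition factors are isomorphic to subgroups of the symmetric group $S_d$. *)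

theory Defs
  imports "HOL-Algebra.Sym_Groups" "HOL-Algebra.SimpleGroups"
begin

definition colored_graph :: "'a set \<Rightarrow> 'a set set \<Rightarrow> ('a \<Rightarrow> nat) \<Rightarrow> nat \<Rightarrow> bool" where
  "colored_graph V E c k \<longleftrightarrow>
     finite V \<and> (\<forall>e\<in>E. \<exists>u v. e = {u, v} \<and> u \<in> V \<and> v \<in> V \<and> u \<noteq> v) \<and>
     (\<forall>v\<in>V. c v \<in> {1..k})"

definition nbhd :: "'a set \<Rightarrow> 'a set set \<Rightarrow> 'a \<Rightarrow> 'a set" where
  "nbhd V E v = {u \<in> V. {u, v} \<in> E}"

definition color_class :: "'a set \<Rightarrow> ('a \<Rightarrow> nat) \<Rightarrow> nat \<Rightarrow> 'a set" where
  "color_class V c i = {v \<in> V. c v = i}"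

definition color_below :: "'a set \<Rightarrow> ('a \<Rightarrow> nat) \<Rightarrow> nat \<Rightarrow> 'a set" where
  "color_below V c i = {v \<in> V. c v < i}"

definition GiX :: "'a set \<Rightarrow> 'a set set \<Rightarrow> ('a \<Rightarrow> nat) \<Rightarrow> nat \<Rightarrow> 'a set \<Rightarrow> 'a set" where
  "GiX V E c i X = {v \<in> color_class V c i. nbhd V E v \<inter> color_below V c i = X}"

definition conn_rel :: "'a set set \<Rightarrow> 'a set \<Rightarrow> ('a \<times> 'a) set" where
  "conn_rel E W = {(u, v). u \<in> W \<and> v \<in> W \<and>
      (u, v) \<in> ({(x, y). x \<in> W \<and> y \<in> W \<and> {x, y} \<in> E})\<^sup>*}"

definition components :: "'a set set \<Rightarrow> 'a set \<Rightarrow> 'a set set" where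
  "components E W = W // conn_rel E W"

definition few_paths_cycles :: "nat \<Rightarrow> 'a set set \<Rightarrow> 'a set \<Rightarrow> bool" where
  "few_paths_cycles t E W \<longleftrightarrow>
     card (components E W) \<le> t \<and> (\<forall>v\<in>W. card {u \<in> W. {u, v} \<in> E} \<le> 2)"

definition circle_bounded :: "nat \<Rightarrow> 'a set \<Rightarrow> 'a set set \<Rightarrow> ('a \<Rightarrow> nat) \<Rightarrow> nat \<Rightarrow> bool" where
  "circle_bounded t V E c k \<longleftrightarrow>
     (\<forall>i\<in>{1..k}. \<forall>X. X \<subseteq> color_below V c i \<longrightarrow> few_paths_cycles t E (GiX V E c i X))"

definition automorphisms :: "'a set \<Rightarrow> 'a set set \<Rightarrow> ('a \<Rightarrow> nat) \<Rightarrow> ('a \<Rightarrow> 'a) set" where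
  "automorphisms V E c = {\<pi>. \<pi> permutes V \<and>
      (\<forall>u\<in>V. \<forall>v\<in>V. {\<pi> u, \<pi> v} \<in> E \<longleftrightarrow> {u, v} \<in> E) \<and> (\<forall>v\<in>V. c (\<pi> v) = c v)}"

definition Aut :: "'a set \<Rightarrow> 'a set set \<Rightarrow> ('a \<Rightarrow> nat) \<Rightarrow> ('a \<Rightarrow> 'a) monoid" where
  "Aut V E c = \<lparr> carrier = automorphisms V E c, mult = (\<circ>), one = id \<rparr>"

definition composition_series :: "('a, 'b) monoid_scheme \<Rightarrow> 'a set list \<Rightarrow> bool" where
  "composition_series G Hs \<longleftrightarrow>
     Hs \<noteq> [] \<and> hd Hs = {\<one>\<^bsub>G\<^esub>} \<and> last Hs = carrier G \<and>
     (\<forall>H\<in>set Hs. subgroup H G) \<and>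
     (\<forall>i. Suc i < length Hs \<longrightarrow>
        Hs ! i \<lhd> G\<lparr>carrier := Hs ! Suc i\<rparr> \<and>
        simple_group (G\<lparr>carrier := Hs ! Suc i\<rparr> Mod (Hs ! i)))"

definition composition_factors :: "('a, 'b) monoid_scheme \<Rightarrow> 'a set monoid set" where
  "composition_factors G = {F. \<exists>Hs i. composition_series G Hs \<and> Suc i < length Hs \<and>
        F = G\<lparr>carrier := Hs ! Suc i\<rparr> Mod (Hs ! i)}"

definition iso_to_subgroup_of_Sym :: "('c, 'd) monoid_scheme \<Rightarrow> nat \<Rightarrow> bool" where
  "iso_to_subgroup_of_Sym F d \<longleftrightarrow>
     (\<exists>H. subgroup H (sym_group d) \<and> F \<cong> (sym_group d)\<lparr>carrier := H\<rparr>)"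

definition Gamma :: "nat \<Rightarrow> ('a, 'b) monoid_scheme \<Rightarrow> bool" where
  "Gamma d G \<longleftrightarrow> group G \<and> finite (carrier G) \<and>
     (\<forall>F\<in>composition_factors G. \<not> comm_group F \<longrightarrow> iso_to_subgroup_of_Sym F d)"

end

theory Submission
  imports Defs
begin



definition pgrp :: "('b \<Rightarrow> 'b) set \<Rightarrow> ('b \<Rightarrow> 'b) monoid" where
  "pgrp A = \<lparr>carrier = A, mult = (\<circ>), one = id\<rparr>"
definition Perm :: "'b set \<Rightarrow> ('b \<Rightarrow> 'b) monoid" where
  "Perm \<Omega> = pgrp {p. p permutes \<Omega>}"

lemma pgrp_simps[simp]: "carrier (pgrp A) = A" "mult (pgrp A) = (\<circ>)" "one (pgrp A) = id"
  by (simp_all add: pgrp_def)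
lemma Perm_simps[simp]: "carrier (Perm \<Omega>) = {p. p permutes \<Omega>}" "mult (Perm \<Omega>) = (\<circ>)" "one (Perm \<Omega>) = id"
  by (simp_all add: Perm_def)
lemma Perm_upd[simp]: "(Perm \<Omega>)\<lparr>carrier := A\<rparr> = pgrp A"
  by (simp add: Perm_def pgrp_def)
lemma sym_group_Perm: "sym_group n = Perm {1..n}"
  by (simp add: sym_group_def Perm_def pgrp_def)

lemma group_Perm: "group (Perm \<Omega>)"
  using permutes_inv permutes_inv_o(2)
  by (auto intro!: groupI simp add: Perm_def pgrp_def permutes_compose permutes_id comp_assoc, blast)

lemma group_pgrp: "subgroup A (Perm \<Omega>) \<Longrightarrow> group (pgrp A)"
  using group.subgroup_imp_group[OF group_Perm] by (metis Perm_upd)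

definition qs :: "('s,'c) monoid_scheme \<Rightarrow> ('b,'d) monoid_scheme \<Rightarrow> 'b set \<Rightarrow> bool" where
  "qs S G A \<longleftrightarrow> subgroup A G \<and> (\<exists>h. h \<in> hom (G\<lparr>carrier := A\<rparr>) S \<and> h ` A = carrier S)"

lemma qs_factor:
  assumes G: "group G" and G': "group G'" and S: "group S"
    and A: "subgroup A G" and h: "h \<in> hom (G\<lparr>carrier := A\<rparr>) S" "h ` A = carrier S"
    and phi: "\<phi> \<in> hom (G\<lparr>carrier := A\<rparr>) G'"
    and ker: "\<And>a. a \<in> A \<Longrightarrow> \<phi> a = \<one>\<^bsub>G'\<^esub> \<Longrightarrow> h a = \<one>\<^bsub>S\<^esub>"
  shows "qs S G' (\<phi> ` A)"
proof -
  let ?GA = "G\<lparr>carrier := A\<rparr>"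
  have GA: "group ?GA" using group.subgroup_imp_group[OF G A] .
  interpret P: group_hom ?GA G' \<phi> using GA G' phi by (simp add: group_hom_def group_hom_axioms_def)
  interpret H: group_hom ?GA S h using GA S h(1) by (simp add: group_hom_def group_hom_axioms_def)
  have sub: "subgroup (\<phi> ` A) G'" using P.img_is_subgroup by simp
  have wd: "h a = h b" if ab: "a \<in> A" "b \<in> A" "\<phi> a = \<phi> b" for a b
  proof -
    have ab': "a \<in> carrier ?GA" "b \<in> carrier ?GA" using ab by auto
    have c: "a \<otimes>\<^bsub>?GA\<^esub> inv\<^bsub>?GA\<^esub> b \<in> carrier ?GA" using P.G.m_closed[OF ab'(1) P.G.inv_closed[OF ab'(2)]] .
    have cA: "x \<in> carrier ?GA \<Longrightarrow> x \<in> A" for x by simp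
    have "\<phi> (a \<otimes>\<^bsub>?GA\<^esub> inv\<^bsub>?GA\<^esub> b) = \<phi> a \<otimes>\<^bsub>G'\<^esub> inv\<^bsub>G'\<^esub> \<phi> b"
      using P.hom_mult[OF ab'(1) P.G.inv_closed[OF ab'(2)]] P.hom_inv[OF ab'(2)] by simp
    also have "\<dots> = \<one>\<^bsub>G'\<^esub>" using ab P.hom_closed ab' by simp
    finally have "h (a \<otimes>\<^bsub>?GA\<^esub> inv\<^bsub>?GA\<^esub> b) = \<one>\<^bsub>S\<^esub>" by (rule ker[OF cA[OF c]])
    moreover have "h (a \<otimes>\<^bsub>?GA\<^esub> inv\<^bsub>?GA\<^esub> b) = h a \<otimes>\<^bsub>S\<^esub> inv\<^bsub>S\<^esub> h b"
      using H.hom_mult[OF ab'(1) P.G.inv_closed[OF ab'(2)]] H.hom_inv[OF ab'(2)] by simp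
    ultimately have "h a \<otimes>\<^bsub>S\<^esub> inv\<^bsub>S\<^esub> h b = \<one>\<^bsub>S\<^esub>" by simp
    thus ?thesis using H.hom_closed ab' H.H.inv_equality
      by (metis H.H.inv_closed H.H.inv_inv H.H.inv_unique' H.H.r_inv)
  qed
  define h' where "h' y = h (SOME a. a \<in> A \<and> \<phi> a = y)" for y
  have h'phi: "h' (\<phi> a) = h a" if "a \<in> A" for a
  proof -
    have "(SOME x. x \<in> A \<and> \<phi> x = \<phi> a) \<in> A \<and> \<phi> (SOME x. x \<in> A \<and> \<phi> x = \<phi> a) = \<phi> a"
      by (rule someI[of _ a]) (use that in auto)
    thus ?thesis using wd that unfolding h'_def by metis
  qed
  have "h' \<in> hom (G'\<lparr>carrier := \<phi> ` A\<rparr>) S"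
  proof (rule homI)
    fix x assume "x \<in> carrier (G'\<lparr>carrier := \<phi> ` A\<rparr>)"
    then obtain a where "a \<in> A" "x = \<phi> a" by auto
    thus "h' x \<in> carrier S" using h'phi h(2) by auto
  next
    fix x y assume "x \<in> carrier (G'\<lparr>carrier := \<phi> ` A\<rparr>)" "y \<in> carrier (G'\<lparr>carrier := \<phi> ` A\<rparr>)"
    then obtain a b where ab: "a \<in> A" "x = \<phi> a" "b \<in> A" "y = \<phi> b" by auto
    have ab': "a \<in> carrier ?GA" "b \<in> carrier ?GA" using ab by auto
    have m: "a \<otimes>\<^bsub>?GA\<^esub> b \<in> A" using P.G.m_closed[OF ab'] by simp
    have "\<phi> a \<otimes>\<^bsub>G'\<^esub> \<phi> b = \<phi> (a \<otimes>\<^bsub>?GA\<^esub> b)" using P.hom_mult[OF ab'] by simp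
    hence "h' (x \<otimes>\<^bsub>G'\<lparr>carrier := \<phi> ` A\<rparr>\<^esub> y) = h (a \<otimes>\<^bsub>?GA\<^esub> b)" using ab m h'phi by simp
    also have "\<dots> = h a \<otimes>\<^bsub>S\<^esub> h b" using H.hom_mult[OF ab'] by simp
    finally show "h' (x \<otimes>\<^bsub>G'\<lparr>carrier := \<phi> ` A\<rparr>\<^esub> y) = h' x \<otimes>\<^bsub>S\<^esub> h' y" using ab h'phi by simp
  qed
  moreover have "h' ` (\<phi> ` A) = carrier S" using h'phi h(2) by (auto simp: image_iff) (metis imageE)
  ultimately show ?thesis using sub unfolding qs_def by blast
qed




lemma Perm_inv[simp]: assumes "p permutes \<Omega>" shows "inv\<^bsub>Perm \<Omega>\<^esub> p = inv' p"
proof -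
  interpret group "Perm \<Omega>" by (rule group_Perm)
  have "inv' p \<in> carrier (Perm \<Omega>)" using permutes_inv[OF assms] by simp
  moreover have "inv' p \<otimes>\<^bsub>Perm \<Omega>\<^esub> p = \<one>\<^bsub>Perm \<Omega>\<^esub>" using permutes_inv_o(2)[OF assms] by simp
  ultimately show ?thesis using inv_equality assms by simp
qed

lemma subgroup_PermI:
  assumes "A \<subseteq> {p. p permutes \<Omega>}" "id \<in> A" "\<And>p q. p \<in> A \<Longrightarrow> q \<in> A \<Longrightarrow> p \<circ> q \<in> A"
    "\<And>p. p \<in> A \<Longrightarrow> inv' p \<in> A"
  shows "subgroup A (Perm \<Omega>)"
proof -
  interpret group "Perm \<Omega>" by (rule group_Perm)
  show ?thesis using assms by (intro subgroupI) auto
qed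

lemma subgroup_PermD:
  assumes "subgroup A (Perm \<Omega>)"
  shows "A \<subseteq> {p. p permutes \<Omega>}" "id \<in> A" "\<And>p q. p \<in> A \<Longrightarrow> q \<in> A \<Longrightarrow> p \<circ> q \<in> A"
    "\<And>p. p \<in> A \<Longrightarrow> inv' p \<in> A"
proof -
  show 1: "A \<subseteq> {p. p permutes \<Omega>}" using subgroup.subset[OF assms] by simp
  show "id \<in> A" using subgroup.one_closed[OF assms] by simp
  show "\<And>p q. p \<in> A \<Longrightarrow> q \<in> A \<Longrightarrow> p \<circ> q \<in> A" using subgroup.m_closed[OF assms] by simp
  show "inv' p \<in> A" if p: "p \<in> A" for p
  proof -
    have "p permutes \<Omega>" using 1 p by auto
    thus ?thesis using subgroup.m_inv_closed[OF assms p] Perm_inv by metis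
  qed
qed

lemma subgroup_Perm_sub: assumes a: "\<Omega>' \<subseteq> \<Omega>" shows "subgroup {p. p permutes \<Omega>'} (Perm \<Omega>)"
proof (rule subgroup_PermI)
  show "{p. p permutes \<Omega>'} \<subseteq> {p. p permutes \<Omega>}" using permutes_subset[OF _ a] by blast
  show "id \<in> {p. p permutes \<Omega>'}" by (simp add: permutes_id)
  show "p \<circ> q \<in> {p. p permutes \<Omega>'}" if "p \<in> {p. p permutes \<Omega>'}" "q \<in> {p. p permutes \<Omega>'}" for p q
    using that permutes_compose by blast
  show "inv' p \<in> {p. p permutes \<Omega>'}" if "p \<in> {p. p permutes \<Omega>'}" for p
    using that permutes_inv by blast
qed

lemma simple_group_group: "simple_group S \<Longrightarrow> group S"
  by (simp add: simple_group_def)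

lemma hom_img_normal:
  assumes GA: "group GA" and S: "group S" and h: "h \<in> hom GA S" "h ` carrier GA = carrier S"
    and K: "K \<lhd> GA"
  shows "h ` K \<lhd> S"
proof -
  interpret H: group_hom GA S h using GA S h(1) by (simp add: group_hom_def group_hom_axioms_def)
  have sK: "subgroup K GA" using K by (simp add: normal_def)
  have sub: "subgroup (h ` K) S" using H.subgroup_img_is_subgroup[OF sK] .
  have Kc: "\<forall>x\<in>carrier GA. \<forall>k\<in>K. x \<otimes>\<^bsub>GA\<^esub> k \<otimes>\<^bsub>GA\<^esub> inv\<^bsub>GA\<^esub> x \<in> K"
    using K H.G.normal_inv_iff by blast
  have KGA: "K \<subseteq> carrier GA" using subgroup.subset[OF sK] .
  show ?thesis unfolding H.H.normal_inv_iff
  proof (intro conjI sub ballI)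
    fix x y assume x: "x \<in> carrier S" and y: "y \<in> h ` K"
    obtain a where a: "a \<in> carrier GA" "x = h a" using x h(2) by auto
    obtain k where k: "k \<in> K" "y = h k" using y by auto
    have kc: "k \<in> carrier GA" using k KGA by auto
    have "x \<otimes>\<^bsub>S\<^esub> y \<otimes>\<^bsub>S\<^esub> inv\<^bsub>S\<^esub> x = h (a \<otimes>\<^bsub>GA\<^esub> k \<otimes>\<^bsub>GA\<^esub> inv\<^bsub>GA\<^esub> a)"
      using a k kc by (simp add: H.hom_mult H.hom_inv)
    thus "x \<otimes>\<^bsub>S\<^esub> y \<otimes>\<^bsub>S\<^esub> inv\<^bsub>S\<^esub> x \<in> h ` K" using Kc a k by auto
  qed
qed

lemma hom_restrict_sub:
  assumes "h \<in> hom (G\<lparr>carrier := A\<rparr>) S" "K \<subseteq> A"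
  shows "h \<in> hom (G\<lparr>carrier := K\<rparr>) S"
  using assms unfolding hom_def by auto

lemma qs_split:
  assumes G: "group G" and G': "group G'" and S: "simple_group S"
    and A: "subgroup A G" and h: "h \<in> hom (G\<lparr>carrier := A\<rparr>) S" "h ` A = carrier S"
    and phi: "\<phi> \<in> hom (G\<lparr>carrier := A\<rparr>) G'"
  shows "qs S G {a \<in> A. \<phi> a = \<one>\<^bsub>G'\<^esub>} \<or> qs S G' (\<phi> ` A)"
proof -
  let ?GA = "G\<lparr>carrier := A\<rparr>"
  have GA: "group ?GA" using group.subgroup_imp_group[OF G A] .
  have Sg: "group S" using S by (rule simple_group_group)
  interpret P: group_hom ?GA G' \<phi> using GA G' phi by (simp add: group_hom_def group_hom_axioms_def)
  have Keq: "kernel ?GA G' \<phi> = {a \<in> A. \<phi> a = \<one>\<^bsub>G'\<^esub>}" by (simp add: kernel_def)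
  have Kn: "{a \<in> A. \<phi> a = \<one>\<^bsub>G'\<^esub>} \<lhd> ?GA" using P.normal_kernel Keq by simp
  have Ks: "subgroup {a \<in> A. \<phi> a = \<one>\<^bsub>G'\<^esub>} G"
    using group.incl_subgroup[OF G A] P.subgroup_kernel Keq by simp
  have N: "h ` {a \<in> A. \<phi> a = \<one>\<^bsub>G'\<^esub>} \<lhd> S"
    using hom_img_normal[OF GA Sg h(1)] h(2) Kn by simp
  from simple_group.no_real_normal_subgroup[OF S N]
  show ?thesis
  proof
    assume e: "h ` {a \<in> A. \<phi> a = \<one>\<^bsub>G'\<^esub>} = carrier S"
    have "h \<in> hom (G\<lparr>carrier := {a \<in> A. \<phi> a = \<one>\<^bsub>G'\<^esub>}\<rparr>) S"
      by (rule hom_restrict_sub[OF h(1)]) auto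
    thus ?thesis using e Ks unfolding qs_def by blast
  next
    assume e: "h ` {a \<in> A. \<phi> a = \<one>\<^bsub>G'\<^esub>} = {\<one>\<^bsub>S\<^esub>}"
    have "qs S G' (\<phi> ` A)"
      by (rule qs_factor[OF G G' Sg A h phi]) (use e in auto)
    thus ?thesis ..
  qed
qed

lemma qs_trivial:
  assumes S: "simple_group S" and q: "qs S G A" and A: "A \<subseteq> {x}"
  shows False
proof -
  obtain h where h: "h ` A = carrier S" using q unfolding qs_def by blast
  have "carrier S \<subseteq> {h x}" using h A by auto
  hence "card (carrier S) \<le> card {h x}" by (intro card_mono) auto
  thus False using simple_group.order_gt_one[OF S] unfolding order_def by simp
qed

lemma qs_sub:
  assumes "qs S G A" "subgroup B G" "B \<subseteq> A" "h \<in> hom (G\<lparr>carrier := A\<rparr>) S" "h ` B = carrier S"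
  shows "qs S G B"
  unfolding qs_def using assms(2,5) hom_restrict_sub[OF assms(4,3)] by blast

lemma emb_mono:
  assumes "iso_to_subgroup_of_Sym S m" "m \<le> n"
  shows "iso_to_subgroup_of_Sym S n"
proof -
  obtain H where H: "subgroup H (sym_group m)" "S \<cong> (sym_group m)\<lparr>carrier := H\<rparr>"
    using assms(1) unfolding iso_to_subgroup_of_Sym_def by blast
  have e: "sym_group m = (sym_group n)\<lparr>carrier := {p. p permutes {1..m}}\<rparr>"
    by (simp add: sym_group_def)
  have s: "subgroup {p. p permutes {1..m}} (sym_group n)"
    using subgroup_Perm_sub[of "{1..m}" "{1..n}"] assms(2) by (simp add: sym_group_Perm)
  have "subgroup H ((sym_group n)\<lparr>carrier := {p. p permutes {1..m}}\<rparr>)"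
    using H(1) e by metis
  hence "subgroup H (sym_group n)"
    using group.incl_subgroup[OF sym_group_is_group s] by blast
  moreover have "(sym_group m)\<lparr>carrier := H\<rparr> = (sym_group n)\<lparr>carrier := H\<rparr>" by (simp add: sym_group_def)
  ultimately show ?thesis using H(2) unfolding iso_to_subgroup_of_Sym_def by auto
qed

definition rst :: "'b set \<Rightarrow> ('b \<Rightarrow> 'b) \<Rightarrow> ('b \<Rightarrow> 'b)" where
  "rst \<Delta> p = (\<lambda>x. if x \<in> \<Delta> then p x else x)"

lemma rst_permutes:
  assumes "inj p" "finite \<Delta>" "p ` \<Delta> \<subseteq> \<Delta>"
  shows "rst \<Delta> p permutes \<Delta>"
proof (rule inj_imp_permutes[OF _ assms(2)])
  show "inj_on (rst \<Delta> p) \<Delta>" unfolding rst_def inj_on_def using injD[OF assms(1)] by simp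
  show "rst \<Delta> p x \<in> \<Delta>" if "x \<in> \<Delta>" for x using that assms(3) unfolding rst_def by auto
  show "rst \<Delta> p x = x" if "x \<notin> \<Delta>" for x using that unfolding rst_def by simp
qed

lemma rst_hom:
  assumes "\<And>p. p \<in> A \<Longrightarrow> inj p" "finite \<Delta>" "\<And>p. p \<in> A \<Longrightarrow> p ` \<Delta> \<subseteq> \<Delta>"
  shows "rst \<Delta> \<in> hom (pgrp A) (Perm \<Delta>)"
proof (rule homI)
  fix p assume "p \<in> carrier (pgrp A)"
  hence "p \<in> A" by simp
  thus "rst \<Delta> p \<in> carrier (Perm \<Delta>)" using rst_permutes[OF assms(1) assms(2) assms(3)] by simp
next
  fix p q assume "p \<in> carrier (pgrp A)" "q \<in> carrier (pgrp A)"
  hence "q ` \<Delta> \<subseteq> \<Delta>" using assms(3) by simp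
  thus "rst \<Delta> (p \<otimes>\<^bsub>pgrp A\<^esub> q) = rst \<Delta> p \<otimes>\<^bsub>Perm \<Delta>\<^esub> rst \<Delta> q"
    unfolding rst_def fun_eq_iff by auto
qed

definition sact :: "'b set set \<Rightarrow> ('b \<Rightarrow> 'b) \<Rightarrow> ('b set \<Rightarrow> 'b set)" where
  "sact P p = (\<lambda>X. if X \<in> P then p ` X else X)"

lemma sact_hom:
  assumes "\<And>p. p \<in> A \<Longrightarrow> inj p" "finite P" "\<And>p X. p \<in> A \<Longrightarrow> X \<in> P \<Longrightarrow> p ` X \<in> P"
  shows "sact P \<in> hom (pgrp A) (Perm P)"
proof (rule homI)
  fix p assume "p \<in> carrier (pgrp A)"
  hence p: "p \<in> A" by simp
  have ip: "inj p" using assms(1) p by simp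
  have "sact P p permutes P"
  proof (rule inj_imp_permutes[OF _ assms(2)])
    show "inj_on (sact P p) P" unfolding inj_on_def sact_def using inj_image_eq_iff[OF ip] by simp
    show "sact P p X \<in> P" if "X \<in> P" for X using that assms(3)[OF p] unfolding sact_def by simp
    show "sact P p X = X" if "X \<notin> P" for X using that unfolding sact_def by simp
  qed
  thus "sact P p \<in> carrier (Perm P)" by simp
next
  fix p q assume "p \<in> carrier (pgrp A)" "q \<in> carrier (pgrp A)"
  hence q: "q \<in> A" by simp
  show "sact P (p \<otimes>\<^bsub>pgrp A\<^esub> q) = sact P p \<otimes>\<^bsub>Perm P\<^esub> sact P q"
    unfolding fun_eq_iff sact_def using assms(3)[OF q] by (simp add: image_comp)
qed



lemma qs_transport:
  assumes fin: "finite \<Omega>" and S: "group S" and q: "qs S (Perm \<Omega>) A"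
  shows "\<exists>A'. qs S (sym_group (card \<Omega>)) A'"
proof -
  let ?n = "card \<Omega>"
  define I where "I = {1..?n}"
  obtain f where f: "bij_betw f \<Omega> I" using bij_betw_iff_card[OF fin] unfolding I_def by fastforce
  define g where "g = inv_into \<Omega> f"
  have g: "bij_betw g I \<Omega>" using f bij_betw_inv_into g_def by blast
  have gf: "\<And>x. x \<in> \<Omega> \<Longrightarrow> g (f x) = x" using f g_def bij_betw_inv_into_left by fastforce
  have fg: "\<And>k. k \<in> I \<Longrightarrow> f (g k) = k" using f g_def bij_betw_inv_into_right by fastforce
  have fO: "\<And>x. x \<in> \<Omega> \<Longrightarrow> f x \<in> I" using f bij_betwE by blast
  have gO: "\<And>k. k \<in> I \<Longrightarrow> g k \<in> \<Omega>" using g bij_betwE by blast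
  define \<kappa> where "\<kappa> p = (\<lambda>k. if k \<in> I then f (p (g k)) else k)" for p :: "'a \<Rightarrow> 'a"
  obtain h where A: "subgroup A (Perm \<Omega>)" and h: "h \<in> hom (pgrp A) S" "h ` A = carrier S"
    using q unfolding qs_def by auto
  have Ap: "\<And>p. p \<in> A \<Longrightarrow> p permutes \<Omega>" using subgroup_PermD(1)[OF A] by auto
  have kp: "\<kappa> p permutes I" if "p permutes \<Omega>" for p
  proof (rule inj_imp_permutes)
    show "inj_on (\<kappa> p) I"
    proof (rule inj_onI)
      fix x y assume xy: "x \<in> I" "y \<in> I" "\<kappa> p x = \<kappa> p y"
      hence "f (p (g x)) = f (p (g y))" unfolding \<kappa>_def by simp
      moreover have "p (g x) \<in> \<Omega>" "p (g y) \<in> \<Omega>" using xy gO permutes_in_image[OF that] by auto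
      ultimately have "p (g x) = p (g y)" using f unfolding bij_betw_def inj_on_def by blast
      hence "g x = g y" using permutes_inj[OF that] by (auto dest: injD)
      thus "x = y" using fg xy by metis
    qed
    show "\<kappa> p x \<in> I" if "x \<in> I" for x
      using that gO[OF that] fO permutes_in_image[OF \<open>p permutes \<Omega>\<close>] unfolding \<kappa>_def by simp
    show "\<kappa> p x = x" if "x \<notin> I" for x using that unfolding \<kappa>_def by simp
  qed (simp add: I_def)
  have hom: "\<kappa> \<in> hom ((Perm \<Omega>)\<lparr>carrier := A\<rparr>) (sym_group ?n)"
  proof (rule homI)
    fix p assume "p \<in> carrier ((Perm \<Omega>)\<lparr>carrier := A\<rparr>)"
    thus "\<kappa> p \<in> carrier (sym_group ?n)" using kp Ap by (simp add: sym_group_def I_def)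
  next
    fix p q assume pq: "p \<in> carrier ((Perm \<Omega>)\<lparr>carrier := A\<rparr>)" "q \<in> carrier ((Perm \<Omega>)\<lparr>carrier := A\<rparr>)"
    have "\<kappa> (p \<circ> q) = \<kappa> p \<circ> \<kappa> q"
    proof
      fix k
      have qp: "q permutes \<Omega>" using pq Ap by simp
      show "\<kappa> (p \<circ> q) k = (\<kappa> p \<circ> \<kappa> q) k"
      proof (cases "k \<in> I")
        case True
        have "q (g k) \<in> \<Omega>" using gO[OF True] permutes_in_image[OF qp] by simp
        thus ?thesis using True fO gf unfolding \<kappa>_def by simp
      qed (simp add: \<kappa>_def)
    qed
    thus "\<kappa> (p \<otimes>\<^bsub>(Perm \<Omega>)\<lparr>carrier := A\<rparr>\<^esub> q) = \<kappa> p \<otimes>\<^bsub>sym_group ?n\<^esub> \<kappa> q"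
      by (simp add: sym_group_def)
  qed
  have "qs S (sym_group ?n) (\<kappa> ` A)"
  proof (rule qs_factor[OF group_Perm sym_group_is_group S A _ _ hom])
    show "h \<in> hom ((Perm \<Omega>)\<lparr>carrier := A\<rparr>) S" using h by simp
    show "h ` A = carrier S" by (rule h(2))
    fix a assume a: "a \<in> A" "\<kappa> a = \<one>\<^bsub>sym_group ?n\<^esub>"
    have "a = id"
    proof
      fix x show "a x = id x"
      proof (cases "x \<in> \<Omega>")
        case True
        have "\<kappa> a (f x) = f x" using a(2) by (simp add: sym_group_def)
        hence "f (a x) = f x" using True fO[OF True] gf[OF True] unfolding \<kappa>_def by simp
        moreover have "a x \<in> \<Omega>" using True permutes_in_image[OF Ap[OF a(1)]] by simp
        ultimately show ?thesis using f True unfolding bij_betw_def inj_on_def by simp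
      qed (use permutes_not_in[OF Ap[OF a(1)]] in simp)
    qed
    moreover have "h id = \<one>\<^bsub>S\<^esub>"
      using group_hom.hom_one[of "pgrp A" S h] group_pgrp[OF A] S h(1)
      by (simp add: group_hom_def group_hom_axioms_def)
    ultimately show "h a = \<one>\<^bsub>S\<^esub>" by simp
  qed
  thus ?thesis by blast
qed




lemma pgrp_inv:
  assumes "subgroup A (Perm Om)" "a \<in> A"
  shows "inv\<^bsub>pgrp A\<^esub> a = inv' a"
proof -
  have g: "group (pgrp A)" using group_pgrp[OF assms(1)] .
  have ap: "a permutes Om" using subgroup_PermD(1)[OF assms(1)] assms(2) by auto
  have "inv' a \<in> carrier (pgrp A)" using subgroup_PermD(4)[OF assms(1) assms(2)] by simp
  moreover have "inv' a \<otimes>\<^bsub>pgrp A\<^esub> a = \<one>\<^bsub>pgrp A\<^esub>" using permutes_inv_o(2)[OF ap] by simp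
  ultimately show ?thesis using group.inv_equality[OF g] assms(2) by simp
qed

lemma pgrp_hom:
  assumes "subgroup A (Perm Om)" "group S" "h \<in> hom (pgrp A) S"
  shows "group_hom (pgrp A) S h"
  using group_pgrp[OF assms(1)] assms(2,3) by (simp add: group_hom_def group_hom_axioms_def)

lemma qs_complement:
  assumes S: "group S" and fin: "finite Om" and q: "qs S (Perm Om) B"
    and fx: "\<And>b x. b \<in> B \<Longrightarrow> x \<in> \<Delta> \<Longrightarrow> b x = x"
  shows "qs S (Perm (Om - \<Delta>)) (rst (Om - \<Delta>) ` B)"
proof -
  obtain h where B: "subgroup B (Perm Om)" and h: "h \<in> hom (pgrp B) S" "h ` B = carrier S"
    using q unfolding qs_def by auto
  have Bp: "\<And>b. b \<in> B \<Longrightarrow> b permutes Om" using subgroup_PermD(1)[OF B] by auto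
  have hom: "rst (Om - \<Delta>) \<in> hom (pgrp B) (Perm (Om - \<Delta>))"
  proof (rule rst_hom)
    show "inj b" if "b \<in> B" for b using permutes_inj[OF Bp[OF that]] .
    show "finite (Om - \<Delta>)" using fin by simp
    show "b ` (Om - \<Delta>) \<subseteq> Om - \<Delta>" if b: "b \<in> B" for b
    proof
      fix y assume "y \<in> b ` (Om - \<Delta>)"
      then obtain x where x: "x \<in> Om - \<Delta>" "y = b x" by auto
      have "b x \<in> Om" using x permutes_in_image[OF Bp[OF b]] by simp
      moreover have "b x \<notin> \<Delta>"
      proof
        assume "b x \<in> \<Delta>"
        hence "b (b x) = b x" using fx b by simp
        hence "b x = x" using permutes_inj[OF Bp[OF b]] by (auto dest: injD)
        thus False using x \<open>b x \<in> \<Delta>\<close> by simp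
      qed
      ultimately show "y \<in> Om - \<Delta>" using x by simp
    qed
  qed
  interpret H: group_hom "pgrp B" S h using pgrp_hom[OF B S h(1)] .
  show ?thesis
  proof (rule qs_factor[OF group_Perm group_Perm S B])
    show "h \<in> hom ((Perm Om)\<lparr>carrier := B\<rparr>) S" using h(1) by simp
    show "h ` B = carrier S" by (rule h(2))
    show "rst (Om - \<Delta>) \<in> hom ((Perm Om)\<lparr>carrier := B\<rparr>) (Perm (Om - \<Delta>))" using hom by simp
    fix b assume b: "b \<in> B" "rst (Om - \<Delta>) b = \<one>\<^bsub>Perm (Om - \<Delta>)\<^esub>"
    have "b = id"
    proof
      fix x show "b x = id x"
      proof (cases "x \<in> Om - \<Delta>")
        case True
        have "rst (Om - \<Delta>) b x = x" using b(2) by simp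
        thus ?thesis using True unfolding rst_def by simp
      next
        case False
        thus ?thesis using fx[OF b(1)] permutes_not_in[OF Bp[OF b(1)]] by (cases "x \<in> Om") auto
      qed
    qed
    thus "h b = \<one>\<^bsub>S\<^esub>" using H.hom_one by simp
  qed
qed

lemma iso_from_inj:
  assumes "subgroup A (Perm Om)" "group S" "h \<in> hom (pgrp A) S" "h ` A = carrier S"
    and inj: "\<And>a. a \<in> A \<Longrightarrow> h a = \<one>\<^bsub>S\<^esub> \<Longrightarrow> a = id"
  shows "S \<cong> pgrp A"
proof -
  interpret H: group_hom "pgrp A" S h using pgrp_hom[OF assms(1-3)] .
  have "kernel (pgrp A) S h = {\<one>\<^bsub>pgrp A\<^esub>}"
    using inj H.hom_one subgroup_PermD(2)[OF assms(1)] by (auto simp: kernel_def)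
  hence "inj_on h (carrier (pgrp A))" using H.inj_iff_trivial_ker by simp
  hence "h \<in> iso (pgrp A) S" using assms(3,4) by (simp add: iso_iff)
  hence "inv_into (carrier (pgrp A)) h \<in> iso S (pgrp A)" using H.G.iso_set_sym by blast
  thus ?thesis by (rule is_isoI)
qed




lemma SM:
  assumes S: "simple_group S" and nab: "\<not> comm_group S"
  shows "qs S (sym_group m) A \<Longrightarrow> iso_to_subgroup_of_Sym S m"
proof (induction m arbitrary: A rule: less_induct)
  case (less m A)
  have Sg: "group S" using S by (rule simple_group_group)
  define Om where "Om = {1..m}"
  have finO: "finite Om" by (simp add: Om_def)
  have cardO: "card Om = m" by (simp add: Om_def)
  have q: "qs S (Perm Om) A" using less.prems by (simp add: sym_group_Perm Om_def)
  obtain h where A: "subgroup A (Perm Om)" and h: "h \<in> hom (pgrp A) S" "h ` A = carrier S"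
    using q unfolding qs_def by auto
  interpret H: group_hom "pgrp A" S h using pgrp_hom[OF A Sg h(1)] .
  have Ap: "\<And>a. a \<in> A \<Longrightarrow> a permutes Om" using subgroup_PermD(1)[OF A] by auto
  have IH: "iso_to_subgroup_of_Sym S m" if DD: "finite \<Delta>" "card \<Delta> < m" "qs S (Perm \<Delta>) B" for \<Delta> :: "'x set" and B
  proof -
    obtain A' where "qs S (sym_group (card \<Delta>)) A'" using qs_transport[OF DD(1) Sg DD(3)] by blast
    hence "iso_to_subgroup_of_Sym S (card \<Delta>)" using less.IH DD(2) by blast
    thus ?thesis using emb_mono DD(2) less_imp_le by blast
  qed
  show ?case
  proof (cases "\<exists>\<Delta>. \<Delta> \<noteq> {} \<and> \<Delta> \<subset> Om \<and> (\<forall>a\<in>A. a ` \<Delta> \<subseteq> \<Delta>)")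
    case True
    then obtain \<Delta> where D0: "\<Delta> \<noteq> {} \<and> \<Delta> \<subset> Om \<and> (\<forall>a\<in>A. a ` \<Delta> \<subseteq> \<Delta>)" by (rule exE)
    hence D: "\<Delta> \<noteq> {}" "\<Delta> \<subset> Om" "\<And>a. a \<in> A \<Longrightarrow> a ` \<Delta> \<subseteq> \<Delta>" by simp_all
    have finD: "finite \<Delta>" using D(2) finO finite_subset by auto
    have cD: "card \<Delta> < m" using psubset_card_mono[OF finO D(2)] cardO by simp
    have hom: "rst \<Delta> \<in> hom (pgrp A) (Perm \<Delta>)"
      by (rule rst_hom) (use Ap permutes_inj D(3) finD in auto)
    have "qs S (Perm Om) {a \<in> A. rst \<Delta> a = \<one>\<^bsub>Perm \<Delta>\<^esub>} \<or> qs S (Perm \<Delta>) (rst \<Delta> ` A)"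
      by (rule qs_split[OF group_Perm group_Perm S A]) (use h hom in simp_all)
    thus ?thesis
    proof
      assume q1: "qs S (Perm Om) {a \<in> A. rst \<Delta> a = \<one>\<^bsub>Perm \<Delta>\<^esub>}"
      have fxD: "b x = x" if "b \<in> {a \<in> A. rst \<Delta> a = \<one>\<^bsub>Perm \<Delta>\<^esub>}" "x \<in> \<Delta>" for b x
      proof -
        have "rst \<Delta> b x = x" using that by simp
        thus ?thesis using that(2) by (simp add: rst_def)
      qed
      have qc: "qs S (Perm (Om - \<Delta>)) (rst (Om - \<Delta>) ` {a \<in> A. rst \<Delta> a = \<one>\<^bsub>Perm \<Delta>\<^esub>})"
        by (rule qs_complement[OF Sg finO q1]) (rule fxD)
      from qc show ?thesis
      proof (rule IH[rotated 2])
        show "finite (Om - \<Delta>)" using finO by simp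
        have "card (Om - \<Delta>) = m - card \<Delta>" using D(2) finD cardO by (simp add: card_Diff_subset psubset_imp_subset)
        moreover have "card \<Delta> > 0" using finD D(1) by (simp add: card_gt_0_iff)
        ultimately show "card (Om - \<Delta>) < m" using cD by simp
      qed
    next
      assume "qs S (Perm \<Delta>) (rst \<Delta> ` A)"
      thus ?thesis using IH[OF finD cD] by simp
    qed
  next
    case False
    have trans: "\<not> (\<forall>a\<in>A. a ` \<Delta> \<subseteq> \<Delta>)" if "\<Delta> \<noteq> {}" "\<Delta> \<subset> Om" for \<Delta>
    proof
      assume "\<forall>a\<in>A. a ` \<Delta> \<subseteq> \<Delta>"
      hence "\<Delta> \<noteq> {} \<and> \<Delta> \<subset> Om \<and> (\<forall>a\<in>A. a ` \<Delta> \<subseteq> \<Delta>)" using that by simp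
      hence "\<exists>\<Delta>. \<Delta> \<noteq> {} \<and> \<Delta> \<subset> Om \<and> (\<forall>a\<in>A. a ` \<Delta> \<subseteq> \<Delta>)" by (rule exI)
      with False show False by contradiction
    qed
    show ?thesis
    proof (cases "m = 0")
      case True
      hence "A \<subseteq> {id}" using Ap by (auto simp: Om_def)
      thus ?thesis using qs_trivial[OF S q] by blast
    next
      case False
      hence one: "1 \<in> Om" by (simp add: Om_def)
      define N where "N = {a \<in> A. h a = \<one>\<^bsub>S\<^esub>}"
      have NA: "N \<subseteq> A" by (auto simp: N_def)
      have Nid: "id \<in> N" using subgroup_PermD(2)[OF A] H.hom_one by (simp add: N_def)
      have Ncomp: "n \<circ> n' \<in> N" if "n \<in> N" "n' \<in> N" for n n'
      proof -
        have "h (n \<otimes>\<^bsub>pgrp A\<^esub> n') = h n \<otimes>\<^bsub>S\<^esub> h n'" using that NA by (intro H.hom_mult) auto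
        thus ?thesis using that subgroup_PermD(3)[OF A] by (auto simp: N_def)
      qed
      have Ainv: "h (inv' a) = inv\<^bsub>S\<^esub> h a" if "a \<in> A" for a
        using H.hom_inv[of a] that pgrp_inv[OF A that] by simp
      have Ninv: "inv' n \<in> N" if "n \<in> N" for n
        using that Ainv subgroup_PermD(4)[OF A] by (auto simp: N_def)
      have Nconj: "a \<circ> n \<circ> inv' a \<in> N" if "a \<in> A" "n \<in> N" for a n
      proof -
        have ia: "inv' a \<in> A" using subgroup_PermD(4)[OF A that(1)] .
        have an: "a \<circ> n \<in> A" using subgroup_PermD(3)[OF A that(1)] that(2) NA by auto
        have "h (a \<circ> n \<circ> inv' a) = h a \<otimes>\<^bsub>S\<^esub> h n \<otimes>\<^bsub>S\<^esub> h (inv' a)"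
          using H.hom_mult[of "a \<circ> n" "inv' a"] H.hom_mult[of a n] an ia that NA by auto
        also have "\<dots> = \<one>\<^bsub>S\<^esub>" using that Ainv h H.hom_closed by (simp add: N_def)
        finally show ?thesis using subgroup_PermD(3)[OF A an ia] by (simp add: N_def)
      qed
      show ?thesis
      proof (cases "N \<subseteq> {id}")
        case True
        have "S \<cong> pgrp A" by (rule iso_from_inj[OF A Sg h]) (use True in \<open>auto simp: N_def\<close>)
        moreover have "subgroup A (sym_group m)" using A by (simp add: sym_group_Perm Om_def)
        moreover have "(sym_group m)\<lparr>carrier := A\<rparr> = pgrp A" by (simp add: sym_group_Perm)
        ultimately show ?thesis unfolding iso_to_subgroup_of_Sym_def by auto
      next
        case False
        then obtain n0 where n0: "n0 \<in> N" "n0 \<noteq> id" by blast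
        define Orb where "Orb x = (\<lambda>n. n x) ` N" for x
        have OrbI: "y \<in> Orb x" if "n \<in> N" "y = n x" for n x y using that unfolding Orb_def by blast
        have Orb_N: "Orb (n x) = Orb x" if "n \<in> N" for n x
        proof
          show "Orb (n x) \<subseteq> Orb x"
          proof
            fix y assume "y \<in> Orb (n x)"
            then obtain n' where n': "n' \<in> N" "y = n' (n x)" by (auto simp: Orb_def)
            hence "y = (n' \<circ> n) x" by simp
            thus "y \<in> Orb x" using Ncomp[OF n'(1) that] unfolding Orb_def by blast
          qed
          show "Orb x \<subseteq> Orb (n x)"
          proof
            fix y assume "y \<in> Orb x"
            then obtain n' where n': "n' \<in> N" "y = n' x" by (auto simp: Orb_def)
            have np: "n permutes Om" using Ap NA that by auto
            have "y = (n' \<circ> inv' n) (n x)" using n' permutes_inverses(2)[OF np] by simp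
            thus "y \<in> Orb (n x)" by (rule OrbI[OF Ncomp[OF n'(1) Ninv[OF that]]])
          qed
        qed
        have Orb_A: "a ` Orb x = Orb (a x)" if "a \<in> A" for a x
        proof
          have ap: "a permutes Om" using Ap that by simp
          show "a ` Orb x \<subseteq> Orb (a x)"
          proof
            fix y assume "y \<in> a ` Orb x"
            then obtain n where n: "n \<in> N" "y = a (n x)" by (auto simp: Orb_def)
            have "y = (a \<circ> n \<circ> inv' a) (a x)" using n permutes_inverses(2)[OF ap] by simp
            thus "y \<in> Orb (a x)" by (rule OrbI[OF Nconj[OF that n(1)]])
          qed
          show "Orb (a x) \<subseteq> a ` Orb x"
          proof
            fix y assume "y \<in> Orb (a x)"
            then obtain n where n: "n \<in> N" "y = n (a x)" by (auto simp: Orb_def)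
            have ia: "inv' a \<in> A" using subgroup_PermD(4)[OF A that] .
            have iap: "inv' a permutes Om" using permutes_inv[OF ap] .
            have "inv' a \<circ> n \<circ> inv' (inv' a) \<in> N" using Nconj[OF ia n(1)] .
            hence m: "inv' a \<circ> n \<circ> a \<in> N" using permutes_inv_inv[OF ap] by simp
            have "y = a ((inv' a \<circ> n \<circ> a) x)" using n permutes_inverses(1)[OF ap] by simp
            thus "y \<in> a ` Orb x" using OrbI[OF m refl] by blast
          qed
        qed
        have OrbO: "Orb x \<subseteq> Om" if "x \<in> Om" for x
          using that NA Ap permutes_in_image by (fastforce simp: Orb_def)
        have Orb_self: "x \<in> Orb x" for x by (rule OrbI[OF Nid]) simp
        show ?thesis
        proof (cases "\<forall>x\<in>Om. x \<in> Orb 1")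
          case True
          define A1 where "A1 = {a \<in> A. a 1 = 1}"
          have A1s: "subgroup A1 (Perm Om)"
          proof (rule subgroup_PermI)
            show "A1 \<subseteq> {p. p permutes Om}" using Ap by (auto simp: A1_def)
            show "id \<in> A1" using subgroup_PermD(2)[OF A] by (simp add: A1_def)
            show "p \<circ> q \<in> A1" if "p \<in> A1" "q \<in> A1" for p q
              using that subgroup_PermD(3)[OF A] by (auto simp: A1_def)
            show "inv' p \<in> A1" if "p \<in> A1" for p
              using that subgroup_PermD(4)[OF A] permutes_inv_eq[OF Ap] by (auto simp: A1_def)
          qed
          have "h ` A1 = carrier S"
          proof
            show "h ` A1 \<subseteq> carrier S" using h(2) by (auto simp: A1_def)
            show "carrier S \<subseteq> h ` A1"
            proof
              fix s assume "s \<in> carrier S"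
              then obtain a where a: "a \<in> A" "s = h a" using h(2) by auto
              have "a 1 \<in> Om" using one permutes_in_image[OF Ap[OF a(1)]] by simp
              then obtain n where n: "n \<in> N" "n 1 = a 1" using True by (auto simp: Orb_def)
              have np: "n permutes Om" using Ap NA n by auto
              have inA: "inv' n \<circ> a \<in> A" using subgroup_PermD(3,4)[OF A] NA n a by blast
              have "(inv' n \<circ> a) 1 = 1" using n permutes_inverses(2)[OF np] by (metis comp_apply)
              moreover have "h (inv' n \<circ> a) = h a"
              proof -
                have "h (inv' n \<circ> a) = h (inv' n) \<otimes>\<^bsub>S\<^esub> h a"
                  using H.hom_mult[of "inv' n" a] subgroup_PermD(4)[OF A] NA n a by auto
                also have "\<dots> = h a" using Ainv NA n a h H.hom_closed by (simp add: N_def)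
                finally show ?thesis .
              qed
              ultimately have "inv' n \<circ> a \<in> A1" "s = h (inv' n \<circ> a)" using inA a by (auto simp: A1_def)
              thus "s \<in> h ` A1" by blast
            qed
          qed
          moreover have "A1 \<subseteq> A" by (auto simp: A1_def)
          moreover have "h \<in> hom ((Perm Om)\<lparr>carrier := A\<rparr>) S" using h(1) by simp
          ultimately have q1: "qs S (Perm Om) A1" using qs_sub[OF q A1s] by blast
          have fx: "b x = x" if "b \<in> A1" "x \<in> {1}" for b x using that by (simp add: A1_def)
          have qc: "qs S (Perm (Om - {1})) (rst (Om - {1}) ` A1)"
            by (rule qs_complement[OF Sg finO q1]) (rule fx)
          from qc show ?thesis
          proof (rule IH[rotated 2])
            show "finite (Om - {1})" using finO by simp
            show "card (Om - {1}) < m" using one cardO finO \<open>m \<noteq> 0\<close> by simp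
          qed
        next
          case False
          then obtain x0 where x0: "x0 \<in> Om" "x0 \<notin> Orb 1" by blast
          define P where "P = Orb ` Om"
          have finP: "finite P" using finO by (simp add: P_def)
          have hom: "sact P \<in> hom (pgrp A) (Perm P)"
          proof (rule sact_hom[OF _ finP])
            show "inj a" if "a \<in> A" for a using permutes_inj[OF Ap[OF that]] .
            show "a ` X \<in> P" if "a \<in> A" "X \<in> P" for a X
              using that Orb_A permutes_in_image[OF Ap[OF that(1)]] by (auto simp: P_def)
          qed
          interpret Q: group_hom "pgrp A" "Perm P" "sact P"
            using group_pgrp[OF A] group_Perm hom by (simp add: group_hom_def group_hom_axioms_def)
          have ker: "h a = \<one>\<^bsub>S\<^esub>" if a: "a \<in> A" "sact P a = \<one>\<^bsub>Perm P\<^esub>" for a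
          proof -
            define M where "M = kernel (pgrp A) (Perm P) (sact P)"
            have Mn: "M \<lhd> pgrp A" using Q.normal_kernel by (simp add: M_def)
            have hM: "h ` M \<lhd> S" using hom_img_normal[OF group_pgrp[OF A] Sg h(1)] h(2) Mn by simp
            from simple_group.no_real_normal_subgroup[OF S hM]
            show ?thesis
            proof
              assume hMS: "h ` M = carrier S"
              have "\<forall>a\<in>A. a ` Orb 1 \<subseteq> Orb 1"
              proof
                fix a assume a: "a \<in> A"
                obtain m' where m': "m' \<in> M" "h a = h m'" using hMS a h(2) H.hom_closed
                  by (metis image_iff image_eqI)
                have mA: "m' \<in> A" and mP: "sact P m' = id" using m' by (auto simp: M_def kernel_def)
                have ia: "inv' m' \<in> A" using subgroup_PermD(4)[OF A mA] .
                define n where "n = a \<circ> inv' m'"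
                have nA: "n \<in> A" using subgroup_PermD(3)[OF A a ia] by (simp add: n_def)
                have "h n = h a \<otimes>\<^bsub>S\<^esub> h (inv' m')"
                  using H.hom_mult[of a "inv' m'"] a ia by (simp add: n_def)
                also have "\<dots> = \<one>\<^bsub>S\<^esub>" using Ainv[OF mA] m'(2) H.hom_closed mA by simp
                finally have nN: "n \<in> N" using nA by (simp add: N_def)
                have mp: "m' permutes Om" using Ap mA by simp
                have aeq: "a = n \<circ> m'" using permutes_inv_o(2)[OF mp] by (simp add: n_def comp_assoc)
                have "Orb 1 \<in> P" using one by (simp add: P_def)
                moreover have "sact P m' (Orb 1) = Orb 1" using mP by simp
                ultimately have "m' ` Orb 1 = Orb 1" by (simp add: sact_def)
                hence "a ` Orb 1 = n ` Orb 1" using aeq by (metis image_comp)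
                also have "\<dots> = Orb (n 1)" using Orb_A nA by simp
                also have "\<dots> = Orb 1" using Orb_N nN by simp
                finally show "a ` Orb 1 \<subseteq> Orb 1" by simp
              qed
              moreover have "Orb 1 \<noteq> {}" using Orb_self by auto
              moreover have "Orb 1 \<subset> Om" using OrbO[OF one] x0 by auto
              ultimately show ?thesis using trans[of "Orb 1"] by simp
            next
              assume "h ` M = {\<one>\<^bsub>S\<^esub>}"
              moreover have "a \<in> M" using a by (simp add: M_def kernel_def)
              ultimately show ?thesis by auto
            qed
          qed
          have qP: "qs S (Perm P) (sact P ` A)"
            by (rule qs_factor[where h=h, OF group_Perm group_Perm Sg A]) (use h hom ker in simp_all)
          have "\<not> inj_on Orb Om"
          proof
            assume inj: "inj_on Orb Om"
            obtain y where y: "n0 y \<noteq> y" using n0(2) by (auto simp: fun_eq_iff)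
            have np: "n0 permutes Om" using Ap NA n0 by auto
            have yO: "y \<in> Om" using y permutes_not_in[OF np] by blast
            have "n0 y \<in> Om" using yO permutes_in_image[OF np] by simp
            moreover have "Orb (n0 y) = Orb y" using Orb_N n0 by simp
            ultimately have "n0 y = y" using inj yO by (meson inj_onD)
            thus False using y by simp
          qed
          hence "card P \<noteq> card Om" using inj_on_iff_eq_card[OF finO, of Orb] by (simp add: P_def)
          moreover have "card P \<le> card Om" using card_image_le[OF finO] by (simp add: P_def)
          ultimately have "card P < m" using cardO by simp
          thus ?thesis using IH[OF finP _ qP] by simp
        qed
      qed
    qed
  qed
qed




definition nb :: "'a set set \<Rightarrow> 'a set \<Rightarrow> 'a \<Rightarrow> 'a set" where
  "nb E W x = {u \<in> W. {u, x} \<in> E}"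
definition arcs :: "'a set set \<Rightarrow> 'a set \<Rightarrow> 'a set \<Rightarrow> ('a \<times> 'a) set" where
  "arcs E W D = {(x, y). x \<in> D \<and> y \<in> nb E W x}"
definition sc :: "'a set set \<Rightarrow> 'a set \<Rightarrow> 'a \<times> 'a \<Rightarrow> 'a \<times> 'a" where
  "sc E W a = (snd a, if \<exists>z\<in>nb E W (snd a). z \<noteq> fst a then (SOME z. z \<in> nb E W (snd a) \<and> z \<noteq> fst a) else fst a)"
definition pA :: "'a set set \<Rightarrow> 'a set \<Rightarrow> 'a set \<Rightarrow> 'a \<times> 'a \<Rightarrow> 'a \<times> 'a" where
  "pA E W D a = (if a \<in> arcs E W D then sc E W a else a)"
definition pm :: "('a \<Rightarrow> 'a) \<Rightarrow> 'a \<times> 'a \<Rightarrow> 'a \<times> 'a" where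
  "pm b a = (b (fst a), b (snd a))"
definition Rel :: "'a set set \<Rightarrow> 'a set \<Rightarrow> ('a \<times> 'a) set" where
  "Rel E W = {(x, y). x \<in> W \<and> y \<in> W \<and> {x, y} \<in> E}"

lemma conn_rel_Rel: "conn_rel E W = {(u, v). u \<in> W \<and> v \<in> W \<and> (u, v) \<in> (Rel E W)\<^sup>*}"
  by (simp add: conn_rel_def Rel_def)

lemma sym_Rel: "sym (Rel E W)"
  by (auto simp: sym_def Rel_def insert_commute)

locale comp =
  fixes E :: "'a set set" and W D :: "'a set" and v0 :: 'a
  assumes finW: "finite W" and deg: "\<And>v. v \<in> W \<Longrightarrow> card {u \<in> W. {u, v} \<in> E} \<le> 2"
    and v0W: "v0 \<in> W" and Dv: "D = conn_rel E W `` {v0}"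
begin

lemma D_sub: "D \<subseteq> W" using Dv by (auto simp: conn_rel_def)

lemma v0D: "v0 \<in> D" using Dv v0W by (simp add: conn_rel_def)

lemma finD: "finite D" using D_sub finW finite_subset by auto

lemma nb_W: "nb E W x \<subseteq> W" by (auto simp: nb_def)

lemma nb_fin: "finite (nb E W x)" using finite_subset[OF nb_W finW] .

lemma nb_sym: assumes "x \<in> W" "y \<in> nb E W x" shows "x \<in> nb E W y"
proof -
  have "{y, x} = {x, y}" by (rule insert_commute)
  thus ?thesis using assms unfolding nb_def by simp
qed

lemma nb_card: "x \<in> W \<Longrightarrow> card (nb E W x) \<le> 2"
  using deg by (simp add: nb_def)

lemma D_closed: assumes "x \<in> D" "y \<in> nb E W x" shows "y \<in> D"
proof -
  have x: "x \<in> W" "(v0, x) \<in> (Rel E W)\<^sup>*" using assms(1) Dv by (auto simp: conn_rel_Rel)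
  have y: "y \<in> W" "{y, x} \<in> E" using assms(2) by (auto simp: nb_def)
  hence "(x, y) \<in> Rel E W" using x by (simp add: Rel_def insert_commute)
  hence "(v0, y) \<in> (Rel E W)\<^sup>*" using x(2) by simp
  thus ?thesis using Dv v0W y(1) by (simp add: conn_rel_Rel)
qed

lemma D_conn: assumes "x \<in> D" "z \<in> D" shows "(x, z) \<in> (Rel E W)\<^sup>*"
proof -
  have "(v0, x) \<in> (Rel E W)\<^sup>*" "(v0, z) \<in> (Rel E W)\<^sup>*" using assms Dv by (auto simp: conn_rel_Rel)
  moreover have "sym ((Rel E W)\<^sup>*)" using sym_rtrancl[OF sym_Rel] .
  ultimately have "(x, v0) \<in> (Rel E W)\<^sup>*" "(v0, z) \<in> (Rel E W)\<^sup>*" by (auto dest: symD)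
  thus ?thesis by simp
qed

lemma D_induct:
  assumes x0: "x0 \<in> D" and bs: "P x0"
    and stp: "\<And>x y. x \<in> D \<Longrightarrow> P x \<Longrightarrow> y \<in> nb E W x \<Longrightarrow> P y"
    and z: "z \<in> D"
  shows "P z"
proof -
  have "(x0, z) \<in> (Rel E W)\<^sup>*" using D_conn[OF x0 z] .
  hence "z \<in> D \<and> P z"
  proof (induction rule: rtrancl_induct)
    case base thus ?case using x0 bs by simp
  next
    case (step y w)
    have "w \<in> nb E W y" using step(2) by (auto simp: Rel_def nb_def insert_commute)
    have yD: "y \<in> D" and Py: "P y" using step(3) by simp_all
    show ?case using D_closed[OF yD \<open>w \<in> nb E W y\<close>] stp[OF yD Py \<open>w \<in> nb E W y\<close>] by simp
  qed
  thus ?thesis by simp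
qed

lemma nb_uniq:
  assumes "y \<in> W" "x \<in> nb E W y" "z1 \<in> nb E W y" "z2 \<in> nb E W y" "z1 \<noteq> x" "z2 \<noteq> x"
  shows "z1 = z2"
proof (rule ccontr)
  assume ne: "z1 \<noteq> z2"
  have "{x, z1, z2} \<subseteq> nb E W y" using assms by simp
  hence "card {x, z1, z2} \<le> card (nb E W y)" using nb_fin by (intro card_mono) auto
  moreover have "card {x, z1, z2} = 3" using ne assms(5,6) by simp
  ultimately show False using nb_card[OF assms(1)] by simp
qed

lemma sc_eq1:
  assumes "y \<in> W" "x \<in> nb E W y" "z \<in> nb E W y" "z \<noteq> x"
  shows "sc E W (x, y) = (y, z)"
proof -
  have ex: "\<exists>z\<in>nb E W y. z \<noteq> x" using assms by blast
  have "(SOME z. z \<in> nb E W y \<and> z \<noteq> x) \<in> nb E W y \<and> (SOME z. z \<in> nb E W y \<and> z \<noteq> x) \<noteq> x"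
    by (rule someI[of _ z]) (use assms in simp)
  hence "(SOME z. z \<in> nb E W y \<and> z \<noteq> x) = z" using nb_uniq[OF assms(1,2)] assms(3,4) by blast
  thus ?thesis using ex by (simp add: sc_def)
qed

lemma sc_eq2:
  assumes "\<And>z. z \<in> nb E W y \<Longrightarrow> z = x"
  shows "sc E W (x, y) = (y, x)"
proof -
  have "\<not> (\<exists>z\<in>nb E W y. z \<noteq> x)" using assms by blast
  thus ?thesis unfolding sc_def by simp
qed

lemma arcs_iff: "(x, y) \<in> arcs E W D \<longleftrightarrow> x \<in> D \<and> y \<in> nb E W x"
  by (simp add: arcs_def)

lemma arcs_swap: assumes "a \<in> arcs E W D" shows "prod.swap a \<in> arcs E W D"
proof -
  obtain x y where a: "a = (x, y)" by (cases a)
  have xD: "x \<in> D" and ynb: "y \<in> nb E W x" using assms a by (simp_all add: arcs_iff)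
  have yD: "y \<in> D" using D_closed[OF xD ynb] .
  have xnb: "x \<in> nb E W y" using nb_sym[OF _ ynb] xD D_sub by blast
  show ?thesis using a yD xnb by (simp add: arcs_iff)
qed

lemma arcs_swap_iff: "prod.swap a \<in> arcs E W D \<longleftrightarrow> a \<in> arcs E W D"
proof
  assume "prod.swap a \<in> arcs E W D"
  from arcs_swap[OF this] show "a \<in> arcs E W D" by simp
qed (rule arcs_swap)

lemma sc_cases:
  assumes "(x, y) \<in> arcs E W D"
  obtains z where "z \<in> nb E W y" "z \<noteq> x" "sc E W (x, y) = (y, z)"
    | "\<not> (\<exists>z\<in>nb E W y. z \<noteq> x)" "sc E W (x, y) = (y, x)"
proof -
  have xD: "x \<in> D" and ynb: "y \<in> nb E W x" using assms by (simp_all add: arcs_iff)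
  have yD: "y \<in> D" using D_closed[OF xD ynb] .
  have xnb: "x \<in> nb E W y" using nb_sym[OF _ ynb] xD D_sub by blast
  have y: "y \<in> D" "y \<in> W" "x \<in> nb E W y" using yD xnb D_sub by auto
  show ?thesis
  proof (cases "\<exists>z\<in>nb E W y. z \<noteq> x")
    case True
    then obtain z where "z \<in> nb E W y" "z \<noteq> x" by blast
    thus ?thesis using that(1) sc_eq1[OF y(2,3)] by blast
  next
    case False
    moreover have "sc E W (x, y) = (y, x)" using False unfolding sc_def by simp
    ultimately show ?thesis by (rule that(2))
  qed
qed

lemma sc_arcs: assumes "a \<in> arcs E W D" shows "sc E W a \<in> arcs E W D"
proof -
  obtain x y where a: "a = (x, y)" by (cases a)
  have xD: "x \<in> D" and ynb: "y \<in> nb E W x" using assms a by (simp_all add: arcs_iff)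
  have yD: "y \<in> D" using D_closed[OF xD ynb] .
  have xnb: "x \<in> nb E W y" using nb_sym[OF _ ynb] xD D_sub by blast
  have y: "y \<in> D" "x \<in> nb E W y" using yD xnb by simp_all
  have "sc E W (x, y) \<in> arcs E W D" using assms unfolding a
  proof (cases rule: sc_cases)
    case (1 z) thus ?thesis using y by (simp add: arcs_iff)
  next
    case 2 from 2(2) show ?thesis using y xD by (simp add: arcs_iff)
  qed
  thus ?thesis using a by simp
qed

lemma sc_swap: assumes "a \<in> arcs E W D" shows "sc E W (prod.swap (sc E W a)) = prod.swap a"
proof -
  obtain x y where a: "a = (x, y)" by (cases a)
  have xD: "x \<in> D" and ynb: "y \<in> nb E W x" using assms a by (simp_all add: arcs_iff)
  have yD: "y \<in> D" using D_closed[OF xD ynb] .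
  have xnb: "x \<in> nb E W y" using nb_sym[OF _ ynb] xD D_sub by blast
  have y: "y \<in> W" "x \<in> nb E W y" using yD xnb D_sub by auto
  have "sc E W (prod.swap (sc E W (x, y))) = prod.swap (x, y)" using assms unfolding a
  proof (cases rule: sc_cases)
    case (1 z)
    have "sc E W (z, y) = (y, x)" using sc_eq1[OF y(1) 1(1) y(2)] 1(2) by simp
    thus ?thesis using 1 by simp
  next
    case 2
    from 2(2) show ?thesis by simp
  qed
  thus ?thesis using a by simp
qed

lemma sc_inj: "inj_on (sc E W) (arcs E W D)"
proof (rule inj_onI)
  fix a b assume ab: "a \<in> arcs E W D" "b \<in> arcs E W D" "sc E W a = sc E W b"
  have "sc E W (prod.swap (sc E W a)) = sc E W (prod.swap (sc E W b))" using ab(3) by simp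
  hence "prod.swap a = prod.swap b" using sc_swap ab(1,2) by simp
  thus "a = b" by (metis swap_swap)
qed

lemma arcs_fin: "finite (arcs E W D)"
proof -
  have "arcs E W D \<subseteq> D \<times> W" using nb_W by (auto simp: arcs_def)
  thus ?thesis using finD finW finite_subset by blast
qed

lemma pA_permutes: "pA E W D permutes arcs E W D"
proof (rule inj_imp_permutes[OF _ arcs_fin])
  show "inj_on (pA E W D) (arcs E W D)" using sc_inj unfolding inj_on_def pA_def by simp
  show "pA E W D a \<in> arcs E W D" if "a \<in> arcs E W D" for a using sc_arcs that by (simp add: pA_def)
  show "pA E W D a = a" if "a \<notin> arcs E W D" for a using that by (simp add: pA_def)
qed

lemma pA_nil: obtains N where "N > 0" "pA E W D ^^ N = id"
proof -
  have p: "permutation (pA E W D)" unfolding permutation_permutes using pA_permutes arcs_fin by blast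
  obtain n where n: "pA E W D ^^ n = id" "n > 0" by (rule permutation_is_nilpotent[OF p])
  show ?thesis by (rule that[OF n(2) n(1)])
qed

lemma pA_swap: "pA E W D (prod.swap (pA E W D a)) = prod.swap a"
proof (cases "a \<in> arcs E W D")
  case True
  thus ?thesis using sc_swap sc_arcs arcs_swap unfolding pA_def by simp
next
  case False
  thus ?thesis using arcs_swap_iff unfolding pA_def by simp
qed

end




definition good :: "'a set set \<Rightarrow> 'a set \<Rightarrow> ('a \<Rightarrow> 'a) \<Rightarrow> bool" where
  "good E D b \<longleftrightarrow> b permutes D \<and> (\<forall>x\<in>D. \<forall>y\<in>D. {b x, b y} \<in> E \<longleftrightarrow> {x, y} \<in> E)"

lemma pm_comp: "pm (b \<circ> b') a = pm b (pm b' a)" by (simp add: pm_def)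
lemma pm_swap: "pm b (prod.swap a) = prod.swap (pm b a)" by (simp add: pm_def)

context comp
begin

lemma b_nb:
  assumes g: "good E D b" and x: "x \<in> D"
  shows "b ` nb E W x = nb E W (b x)"
proof
  have bp: "b permutes D" and be: "\<And>x y. x \<in> D \<Longrightarrow> y \<in> D \<Longrightarrow> {b x, b y} \<in> E \<longleftrightarrow> {x, y} \<in> E"
    using g by (auto simp: good_def)
  have bx: "b x \<in> D" using x permutes_in_image[OF bp] by simp
  show "b ` nb E W x \<subseteq> nb E W (b x)"
  proof
    fix w assume "w \<in> b ` nb E W x"
    then obtain u where u: "u \<in> nb E W x" "w = b u" by auto
    have uD: "u \<in> D" using D_closed[OF x u(1)] .
    have "{u, x} \<in> E" using u(1) by (simp add: nb_def)
    hence "{b u, b x} \<in> E" using be[OF uD x] by simp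
    moreover have "b u \<in> W" using uD permutes_in_image[OF bp] D_sub by auto
    ultimately show "w \<in> nb E W (b x)" using u by (simp add: nb_def)
  qed
  show "nb E W (b x) \<subseteq> b ` nb E W x"
  proof
    fix w assume w: "w \<in> nb E W (b x)"
    have wD: "w \<in> D" using D_closed[OF bx w] .
    then obtain u where u: "u \<in> D" "w = b u" using permutes_image[OF bp] by (metis imageE)
    have "{b u, b x} \<in> E" using w u by (simp add: nb_def)
    hence "{u, x} \<in> E" using be[OF u(1) x] by simp
    hence "u \<in> nb E W x" using u(1) D_sub by (auto simp: nb_def)
    thus "w \<in> b ` nb E W x" using u by simp
  qed
qed

lemma b_arcs:
  assumes g: "good E D b"
  shows "pm b a \<in> arcs E W D \<longleftrightarrow> a \<in> arcs E W D"
proof -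
  have bp: "b permutes D" using g by (simp add: good_def)
  obtain x y where a: "a = (x, y)" by (cases a)
  show ?thesis
  proof (cases "x \<in> D")
    case True
    have "b y \<in> nb E W (b x) \<longleftrightarrow> y \<in> nb E W x"
      using b_nb[OF g True] permutes_inj[OF bp] by (metis inj_image_mem_iff)
    thus ?thesis using a True permutes_in_image[OF bp] by (simp add: pm_def arcs_iff)
  next
    case False
    have "b x \<notin> D" using False permutes_in_image[OF bp] by simp
    thus ?thesis using a False by (simp add: pm_def arcs_iff)
  qed
qed

lemma b_sc:
  assumes g: "good E D b" and a: "a \<in> arcs E W D"
  shows "sc E W (pm b a) = pm b (sc E W a)"
proof -
  have bp: "b permutes D" using g by (simp add: good_def)
  obtain x y where ax: "a = (x, y)" by (cases a)
  have xD: "x \<in> D" and ynb: "y \<in> nb E W x" using a ax by (simp_all add: arcs_iff)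
  have yD: "y \<in> D" using D_closed[OF xD ynb] .
  have xnb: "x \<in> nb E W y" using nb_sym[OF _ ynb] xD D_sub by blast
  have byD: "b y \<in> D" using yD permutes_in_image[OF bp] by simp
  have byW: "b y \<in> W" using byD D_sub by auto
  have nbb: "nb E W (b y) = b ` nb E W y" using b_nb[OF g yD] by simp
  have bxnb: "b x \<in> nb E W (b y)" using nbb xnb by simp
  have "sc E W (b x, b y) = pm b (sc E W (x, y))" using a unfolding ax
  proof (cases rule: sc_cases)
    case (1 z)
    have "b z \<in> nb E W (b y)" using nbb 1(1) by simp
    moreover have "b z \<noteq> b x" using 1(2) permutes_inj[OF bp] by (auto dest: injD)
    ultimately have "sc E W (b x, b y) = (b y, b z)" using sc_eq1[OF byW bxnb] by simp
    thus ?thesis using 1(3) by (simp add: pm_def)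
  next
    case 2
    have "\<not> (\<exists>z\<in>nb E W (b y). z \<noteq> b x)"
    proof
      assume "\<exists>z\<in>nb E W (b y). z \<noteq> b x"
      then obtain z where z: "z \<in> nb E W (b y)" "z \<noteq> b x" by blast
      then obtain u where u: "u \<in> nb E W y" "z = b u" using nbb by auto
      have "u \<noteq> x" using u z by auto
      thus False using 2(1) u(1) by blast
    qed
    hence "sc E W (b x, b y) = (b y, b x)" unfolding sc_def by simp
    thus ?thesis using 2(2) by (simp add: pm_def)
  qed
  thus ?thesis using ax by (simp add: pm_def)
qed

lemma b_pA:
  assumes g: "good E D b"
  shows "pA E W D (pm b a) = pm b (pA E W D a)"
  using b_sc[OF g] b_arcs[OF g] unfolding pA_def by simp

lemma b_pA_pow:
  assumes g: "good E D b"
  shows "(pA E W D ^^ n) (pm b a) = pm b ((pA E W D ^^ n) a)"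
  by (induction n) (simp_all add: b_pA[OF g])

lemma b_free:
  assumes g: "good E D b" and a: "(x, y) \<in> arcs E W D" and bx: "b x = x" and byy: "b y = y"
  shows "b = id"
proof
  fix z
  have bp: "b permutes D" using g by (simp add: good_def)
  have xD: "x \<in> D" and ynb: "y \<in> nb E W x" using a by (simp_all add: arcs_iff)
  define Q where "Q u \<longleftrightarrow> b u = u \<and> (\<forall>w\<in>nb E W u. b w = w)" for u
  have key: "\<forall>w\<in>nb E W u. b w = w" if uD: "u \<in> D" and bu: "b u = u" and w0: "w0 \<in> nb E W u" and bw0: "b w0 = w0" for u w0
  proof
    fix w assume w: "w \<in> nb E W u"
    show "b w = w"
    proof (rule ccontr)
      assume ne: "b w \<noteq> w"
      have "b w \<in> nb E W u" using b_nb[OF g uD] bu w by (metis imageI)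
      moreover have "w \<noteq> w0" using ne bw0 by auto
      moreover have "b w \<noteq> w0" using bw0 \<open>w \<noteq> w0\<close> permutes_inj[OF bp] by (metis injD)
      ultimately have "w = b w" using nb_uniq[of u w0 w "b w"] w w0 uD D_sub by blast
      thus False using ne by simp
    qed
  qed
  have Qx: "Q x" using key[OF xD bx ynb byy] bx by (simp add: Q_def)
  have "Q z" if "z \<in> D" for z
  proof (rule D_induct[where P=Q, OF xD Qx _ that])
    fix u w assume uD: "u \<in> D" and Qu: "Q u" and w: "w \<in> nb E W u"
    have bw: "b w = w" using Qu w by (simp add: Q_def)
    have wD: "w \<in> D" using D_closed[OF uD w] .
    have "u \<in> nb E W w" using nb_sym[OF _ w] uD D_sub by blast
    moreover have "b u = u" using Qu by (simp add: Q_def)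
    ultimately show "Q w" using key[OF wD bw] bw by (simp add: Q_def)
  qed
  thus "b z = id z" using permutes_not_in[OF bp] by (cases "z \<in> D") (auto simp: Q_def)
qed

end




definition orbA :: "'a set set \<Rightarrow> 'a set \<Rightarrow> 'a set \<Rightarrow> 'a \<times> 'a \<Rightarrow> ('a \<times> 'a) set" where
  "orbA E W D a = range (\<lambda>n. (pA E W D ^^ n) a)"

lemma orbA_I: "(pA E W D ^^ n) a \<in> orbA E W D a" by (auto simp: orbA_def)
lemma orbA_self: "a \<in> orbA E W D a" using orbA_I[where n=0] by simp
lemma orbA_E: "e \<in> orbA E W D a \<Longrightarrow> (\<And>n. e = (pA E W D ^^ n) a \<Longrightarrow> P) \<Longrightarrow> P"
  by (auto simp: orbA_def)

lemma orbA_closed: "e \<in> orbA E W D c \<Longrightarrow> (pA E W D ^^ m) e \<in> orbA E W D c"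
proof (erule orbA_E)
  fix n assume "e = (pA E W D ^^ n) c"
  hence "(pA E W D ^^ m) e = (pA E W D ^^ (m + n)) c" by (simp add: funpow_add)
  thus ?thesis using orbA_I by metis
qed

lemma qs_comm:
  assumes G: "group G" and S: "group S" and q: "qs S G A"
    and c: "\<And>a b. a \<in> A \<Longrightarrow> b \<in> A \<Longrightarrow> a \<otimes>\<^bsub>G\<^esub> b = b \<otimes>\<^bsub>G\<^esub> a"
  shows "comm_group S"
proof -
  obtain h where A: "subgroup A G" and h: "h \<in> hom (G\<lparr>carrier := A\<rparr>) S" "h ` A = carrier S"
    using q unfolding qs_def by auto
  have GA: "group (G\<lparr>carrier := A\<rparr>)" using group.subgroup_imp_group[OF G A] .
  interpret H: group_hom "G\<lparr>carrier := A\<rparr>" S h using GA S h(1) by (simp add: group_hom_def group_hom_axioms_def)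
  show ?thesis
  proof (rule group.group_comm_groupI[OF S])
    fix x y assume "x \<in> carrier S" "y \<in> carrier S"
    then obtain a b where ab: "a \<in> A" "b \<in> A" "x = h a" "y = h b" using h(2) by (metis imageE)
    have "x \<otimes>\<^bsub>S\<^esub> y = h (a \<otimes>\<^bsub>G\<^esub> b)" using H.hom_mult[of a b] ab by simp
    also have "\<dots> = h (b \<otimes>\<^bsub>G\<^esub> a)" using c ab by simp
    also have "\<dots> = y \<otimes>\<^bsub>S\<^esub> x" using H.hom_mult[of b a] ab by simp
    finally show "x \<otimes>\<^bsub>S\<^esub> y = y \<otimes>\<^bsub>S\<^esub> x" .
  qed
qed

lemma bool_perm_comm:
  assumes "p permutes (UNIV :: bool set)" "q permutes (UNIV :: bool set)"
  shows "p \<circ> q = q \<circ> p"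
proof -
  have ip: "p True \<noteq> p False" "q True \<noteq> q False"
    using permutes_inj[OF assms(1)] permutes_inj[OF assms(2)] by (auto dest: injD)
  show ?thesis
  proof
    fix x :: bool
    show "(p \<circ> q) x = (q \<circ> p) x" using ip by (cases x; cases "p True"; cases "q True") auto
  qed
qed

context comp
begin

lemma pA_back: assumes "N > 0" "pA E W D ^^ N = id" shows "(pA E W D ^^ (N - 1)) (pA E W D a) = a"
proof -
  have "pA E W D ^^ N = pA E W D ^^ (N - 1) \<circ> pA E W D"
    using assms(1) funpow_Suc_right[of "N - 1" "pA E W D"] by simp
  thus ?thesis using assms(2) by (metis comp_apply id_apply)
qed

lemma pA_Nk: assumes "pA E W D ^^ N = id" shows "pA E W D ^^ (N * k) = id"
  using assms by (induction k) (simp_all add: funpow_add)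

lemma orbA_back:
  assumes N: "N > 0" "pA E W D ^^ N = id" and e: "(pA E W D ^^ m) e \<in> orbA E W D c"
  shows "e \<in> orbA E W D c"
proof -
  have "m \<le> N * m" using N(1) by simp
  hence "pA E W D ^^ (N * m - m) \<circ> pA E W D ^^ m = pA E W D ^^ (N * m)"
    by (simp add: funpow_add[symmetric])
  hence "(pA E W D ^^ (N * m - m)) ((pA E W D ^^ m) e) = e" using pA_Nk[OF N(2)] by (metis comp_apply id_apply)
  thus ?thesis using orbA_closed[OF e, of "N * m - m"] by simp
qed

lemma swap_pA: assumes N: "N > 0" "pA E W D ^^ N = id"
  shows "prod.swap (pA E W D a) = (pA E W D ^^ (N - 1)) (prod.swap a)"
  using pA_back[OF N, of "prod.swap (pA E W D a)"] pA_swap[of a] by simp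

lemma swap_pow: assumes N: "N > 0" "pA E W D ^^ N = id"
  shows "prod.swap ((pA E W D ^^ n) a) = (pA E W D ^^ (n * (N - 1))) (prod.swap a)"
proof (induction n)
  case 0 thus ?case by simp
next
  case (Suc n)
  have "prod.swap ((pA E W D ^^ Suc n) a) = prod.swap (pA E W D ((pA E W D ^^ n) a))" by simp
  also have "\<dots> = (pA E W D ^^ (N - 1)) (prod.swap ((pA E W D ^^ n) a))" using swap_pA[OF N] by simp
  also have "\<dots> = (pA E W D ^^ (N - 1)) ((pA E W D ^^ (n * (N - 1))) (prod.swap a))" using Suc by simp
  also have "\<dots> = (pA E W D ^^ (Suc n * (N - 1))) (prod.swap a)" by (simp add: funpow_add)
  finally show ?case .
qed

lemma swap_orbA: assumes N: "N > 0" "pA E W D ^^ N = id" and e: "e \<in> orbA E W D c"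
  shows "prod.swap e \<in> orbA E W D (prod.swap c)"
  using e by (rule orbA_E) (simp add: swap_pow[OF N] orbA_I)

lemma cover:
  assumes N: "N > 0" "pA E W D ^^ N = id" and u0: "u0 \<in> nb E W v0" and a: "a \<in> arcs E W D"
  shows "a \<in> orbA E W D (v0, u0) \<or> a \<in> orbA E W D (u0, v0)"
proof -
  define U where "U = orbA E W D (v0, u0) \<union> orbA E W D (u0, v0)"
  have fw: "pA E W D e \<in> U" if "e \<in> U" for e
    using that orbA_closed[of e _ _ _ _ 1] unfolding U_def by auto
  have bw: "e \<in> U" if "pA E W D e \<in> U" for e
    using that orbA_back[OF N, of 1 e] unfolding U_def by auto
  have arc: "pA E W D e = sc E W e" if "e \<in> arcs E W D" for e using that by (simp add: pA_def)
  define Q where "Q x \<longleftrightarrow> (\<forall>y\<in>nb E W x. (x, y) \<in> U \<and> (y, x) \<in> U)" for x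
  have v0W: "v0 \<in> W" using v0D D_sub by auto
  have a0: "(v0, u0) \<in> arcs E W D" using v0D u0 by (simp add: arcs_iff)
  have Qv0: "Q v0" unfolding Q_def
  proof
    fix y assume y: "y \<in> nb E W v0"
    show "(v0, y) \<in> U \<and> (y, v0) \<in> U"
    proof (cases "y = u0")
      case True
      have "(v0, u0) \<in> U" "(u0, v0) \<in> U" unfolding U_def using orbA_self[of "(v0, u0)"] orbA_self[of "(u0, v0)"] by auto
      thus ?thesis using True by simp
    next
      case False
      have "pA E W D (u0, v0) = (v0, y)"
        using arc[OF arcs_swap[OF a0]] sc_eq1[OF v0W u0 y False] by simp
      moreover have "(u0, v0) \<in> U" using orbA_self[of "(u0, v0)"] unfolding U_def by auto
      ultimately have 1: "(v0, y) \<in> U" using fw by metis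
      have yarc: "(y, v0) \<in> arcs E W D" using arcs_swap[of "(v0, y)"] v0D y by (simp add: arcs_iff)
      have "pA E W D (y, v0) = (v0, u0)" using arc[OF yarc] sc_eq1[OF v0W y u0] False by simp
      moreover have "(v0, u0) \<in> U" using orbA_self[of "(v0, u0)"] unfolding U_def by auto
      ultimately have "(y, v0) \<in> U" using bw by metis
      thus ?thesis using 1 by simp
    qed
  qed
  have QD: "Q x" if "x \<in> D" for x
  proof (rule D_induct[where P=Q, OF v0D Qv0 _ that])
    fix x y assume xD: "x \<in> D" and Qx: "Q x" and y: "y \<in> nb E W x"
    have yD: "y \<in> D" using D_closed[OF xD y] .
    have yW: "y \<in> W" using yD D_sub by auto
    have xy: "(x, y) \<in> U" "(y, x) \<in> U" using Qx y by (auto simp: Q_def)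
    have xnb: "x \<in> nb E W y" using nb_sym[OF _ y] xD D_sub by blast
    show "Q y" unfolding Q_def
    proof
      fix z assume z: "z \<in> nb E W y"
      show "(y, z) \<in> U \<and> (z, y) \<in> U"
      proof (cases "z = x")
        case True thus ?thesis using xy by simp
      next
        case False
        have xyarc: "(x, y) \<in> arcs E W D" using xD y by (simp add: arcs_iff)
        have "pA E W D (x, y) = (y, z)" using arc[OF xyarc] sc_eq1[OF yW xnb z False] by simp
        hence 1: "(y, z) \<in> U" using fw[OF xy(1)] by simp
        have zyarc: "(z, y) \<in> arcs E W D" using arcs_swap[of "(y, z)"] yD z by (simp add: arcs_iff)
        have "pA E W D (z, y) = (y, x)" using arc[OF zyarc] sc_eq1[OF yW z xnb] False by simp
        hence "(z, y) \<in> U" using bw xy(2) by metis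
        thus ?thesis using 1 by simp
      qed
    qed
  qed
  obtain x y where axy: "a = (x, y)" by (cases a)
  have "x \<in> D" "y \<in> nb E W x" using a axy by (simp_all add: arcs_iff)
  hence "a \<in> U" using QD axy by (auto simp: Q_def)
  thus ?thesis unfolding U_def by simp
qed

end




lemma Not_permutes: "Not permutes (UNIV :: bool set)"
  by (rule bij_imp_permutes) (auto simp: bij_betw_def inj_def)

lemma L4:
  assumes cp: "comp E W D v0" and S: "simple_group S" and nab: "\<not> comm_group S"
    and q: "qs S (Perm D) B" and gB: "\<And>b. b \<in> B \<Longrightarrow> good E D b"
  shows False
proof -
  interpret comp E W D v0 by (rule cp)
  have Sg: "group S" using S by (rule simple_group_group)
  obtain h where B: "subgroup B (Perm D)" and h: "h \<in> hom (pgrp B) S" "h ` B = carrier S"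
    using q unfolding qs_def by auto
  have Bp: "\<And>b. b \<in> B \<Longrightarrow> b permutes D" using subgroup_PermD(1)[OF B] by auto
  show False
  proof (cases "nb E W v0 = {}")
    case True
    have Dv0: "x = v0" if "x \<in> D" for x
    proof (rule D_induct[where P="\<lambda>x. x = v0", OF v0D refl _ that])
      fix x y assume "x \<in> D" "x = v0" "y \<in> nb E W x"
      thus "y = v0" using True by simp
    qed
    have "B \<subseteq> {id}"
    proof
      fix b assume b: "b \<in> B"
      have "b = id"
      proof
        fix x show "b x = id x"
        proof (cases "x \<in> D")
          case True
          have "b x \<in> D" using True permutes_in_image[OF Bp[OF b]] by simp
          hence "b x = v0" by (rule Dv0)
          moreover have "x = v0" using True by (rule Dv0)
          ultimately show ?thesis by simp
        qed (use permutes_not_in[OF Bp[OF b]] in simp)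
      qed
      thus "b \<in> {id}" by simp
    qed
    thus False using qs_trivial[OF S q] by blast
  next
    case False
    then obtain u0 where u0: "u0 \<in> nb E W v0" by blast
    obtain N where N: "N > 0" "pA E W D ^^ N = id" by (rule pA_nil)
    define a0 where "a0 = (v0, u0)"
    define O0 where "O0 = orbA E W D a0"
    define O1 where "O1 = orbA E W D (u0, v0)"
    have a0: "a0 \<in> arcs E W D" using v0D u0 by (simp add: arcs_iff a0_def)
    have swa0: "prod.swap a0 = (u0, v0)" by (simp add: a0_def)
    define par where "par b \<longleftrightarrow> pm b a0 \<in> O0" for b
    have arcB: "pm b a0 \<in> arcs E W D" if "b \<in> B" for b using b_arcs[OF gB[OF that]] a0 by simp
    have covB: "e \<in> O0 \<or> e \<in> O1" if "e \<in> arcs E W D" for e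
      using cover[OF N u0 that] by (simp add: O0_def O1_def a0_def)
    have powB: "pm b ((pA E W D ^^ n) c) = (pA E W D ^^ n) (pm b c)" if "b \<in> B" for b n c
      using b_pA_pow[OF gB[OF that]] by simp
    have K1: "(pA E W D ^^ m) e \<in> O0 \<longleftrightarrow> e \<in> O0" for m e
      using orbA_closed[of e E W D a0 m] orbA_back[OF N, of m e a0] by (auto simp: O0_def)
    have Bcomp: "b \<circ> b' \<in> B" if "b \<in> B" "b' \<in> B" for b b' using subgroup_PermD(3)[OF B that] .
    have par_mult: "par (b \<circ> b') \<longleftrightarrow> (par b \<longleftrightarrow> par b')" if bb: "b \<in> B" "b' \<in> B" for b b'
    proof (cases "(u0, v0) \<in> O0")
      case True
      have allO0: "e \<in> O0" if "e \<in> arcs E W D" for e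
      proof -
        have "e \<in> O1 \<Longrightarrow> e \<in> O0" unfolding O1_def
          by (erule orbA_E) (use K1 True in simp)
        thus ?thesis using covB[OF that] by blast
      qed
      show ?thesis using allO0[OF arcB[OF Bcomp[OF bb]]] allO0[OF arcB[OF bb(1)]] allO0[OF arcB[OF bb(2)]]
        by (simp add: par_def)
    next
      case False
      have K2: "prod.swap e \<in> O0 \<longleftrightarrow> e \<notin> O0" if e: "e \<in> O0 \<or> e \<in> O1" for e
      proof (cases "e \<in> O0")
        case True
        have "prod.swap e \<in> orbA E W D (u0, v0)" using swap_orbA[OF N True[unfolded O0_def]] swa0 by simp
        then obtain k where "prod.swap e = (pA E W D ^^ k) (u0, v0)" by (rule orbA_E)
        hence "prod.swap e \<notin> O0" using K1 False by simp
        thus ?thesis using True by simp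
      next
        case eF: False
        hence "e \<in> O1" using e by simp
        hence "prod.swap e \<in> orbA E W D a0" using swap_orbA[OF N, of e "(u0, v0)"] by (simp add: O1_def a0_def)
        thus ?thesis using eF by (simp add: O0_def)
      qed
      have K3: "pm b e \<in> O0 \<longleftrightarrow> (e \<in> O0 \<longleftrightarrow> par b)" if b: "b \<in> B" and e: "e \<in> O0 \<or> e \<in> O1" for b e
        using e
      proof
        assume "e \<in> O0"
        then obtain m where m: "e = (pA E W D ^^ m) a0" unfolding O0_def by (rule orbA_E)
        have "pm b e = (pA E W D ^^ m) (pm b a0)" using powB[OF b] m by simp
        thus ?thesis using K1 \<open>e \<in> O0\<close> by (simp add: par_def)
      next
        assume "e \<in> O1"
        then obtain m where m: "e = (pA E W D ^^ m) (u0, v0)" unfolding O1_def by (rule orbA_E)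
        have eF: "e \<notin> O0" using m K1 False by simp
        have "pm b e = (pA E W D ^^ m) (prod.swap (pm b a0))" using powB[OF b] m pm_swap swa0 by metis
        hence "pm b e \<in> O0 \<longleftrightarrow> prod.swap (pm b a0) \<in> O0" using K1 by simp
        also have "\<dots> \<longleftrightarrow> \<not> par b" using K2[OF covB[OF arcB[OF b]]] by (simp add: par_def)
        finally show ?thesis using eF by simp
      qed
      have "par (b \<circ> b') \<longleftrightarrow> pm b (pm b' a0) \<in> O0" by (simp add: par_def pm_comp)
      also have "\<dots> \<longleftrightarrow> (pm b' a0 \<in> O0 \<longleftrightarrow> par b)" using K3[OF bb(1) covB[OF arcB[OF bb(2)]]] .
      finally show ?thesis by (auto simp: par_def)
    qed
    have uniq: "g = g'" if g: "g \<in> B" "g' \<in> B" "pm g a0 = pm g' a0" for g g'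
    proof -
      have ig: "inv' g' \<in> B" using subgroup_PermD(4)[OF B g(2)] .
      have cB: "inv' g' \<circ> g \<in> B" using Bcomp[OF ig g(1)] .
      have gp: "g' permutes D" using Bp[OF g(2)] .
      have "pm (inv' g' \<circ> g) a0 = a0"
        using g(3) permutes_inverses(2)[OF gp] by (simp add: pm_def a0_def)
      hence "inv' g' \<circ> g = id"
        using b_free[OF gB[OF cB] a0[unfolded a0_def]] by (simp add: pm_def a0_def)
      hence "g' \<circ> (inv' g' \<circ> g) = g'" by simp
      thus "g = g'" using permutes_inv_o(1)[OF gp] by (simp add: comp_assoc[symmetric])
    qed
    have comm: "b \<circ> b' = b' \<circ> b" if bb: "b \<in> B" "b' \<in> B" "par b" "par b'" for b b'
    proof (rule uniq[OF Bcomp[OF bb(1,2)] Bcomp[OF bb(2,1)]])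
      obtain i where i: "pm b a0 = (pA E W D ^^ i) a0" using bb(3) unfolding par_def O0_def by (rule orbA_E)
      obtain j where j: "pm b' a0 = (pA E W D ^^ j) a0" using bb(4) unfolding par_def O0_def by (rule orbA_E)
      have "pm (b \<circ> b') a0 = (pA E W D ^^ (j + i)) a0" using powB[OF bb(1)] i j by (simp add: pm_comp funpow_add)
      moreover have "pm (b' \<circ> b) a0 = (pA E W D ^^ (i + j)) a0" using powB[OF bb(2)] i j by (simp add: pm_comp funpow_add)
      ultimately show "pm (b \<circ> b') a0 = pm (b' \<circ> b) a0" by (simp add: add.commute)
    qed
    define \<epsilon> where "\<epsilon> b = (if par b then id else Not)" for b
    have ehom: "\<epsilon> \<in> hom ((Perm D)\<lparr>carrier := B\<rparr>) (Perm (UNIV :: bool set))"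
    proof (rule homI)
      fix b show "\<epsilon> b \<in> carrier (Perm (UNIV :: bool set))"
        using Not_permutes by (simp add: \<epsilon>_def permutes_id)
    next
      fix b b' assume "b \<in> carrier ((Perm D)\<lparr>carrier := B\<rparr>)" "b' \<in> carrier ((Perm D)\<lparr>carrier := B\<rparr>)"
      hence bb: "b \<in> B" "b' \<in> B" by simp_all
      show "\<epsilon> (b \<otimes>\<^bsub>(Perm D)\<lparr>carrier := B\<rparr>\<^esub> b') = \<epsilon> b \<otimes>\<^bsub>Perm (UNIV :: bool set)\<^esub> \<epsilon> b'"
        using par_mult[OF bb] by (auto simp: \<epsilon>_def fun_eq_iff)
    qed
    have "qs S (Perm D) {b \<in> B. \<epsilon> b = \<one>\<^bsub>Perm (UNIV :: bool set)\<^esub>} \<or> qs S (Perm (UNIV :: bool set)) (\<epsilon> ` B)"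
      by (rule qs_split[OF group_Perm group_Perm S B _ h(2) ehom]) (use h(1) in simp)
    thus False
    proof
      assume qa: "qs S (Perm D) {b \<in> B. \<epsilon> b = \<one>\<^bsub>Perm (UNIV :: bool set)\<^esub>}"
      have pe: "par b" if "\<epsilon> b = id" for b
      proof (rule ccontr)
        assume "\<not> par b"
        hence "Not = id" using that by (simp add: \<epsilon>_def)
        thus False by (metis id_apply)
      qed
      have "comm_group S"
        by (rule qs_comm[OF group_Perm Sg qa]) (use comm pe in auto)
      thus False using nab by simp
    next
      assume qb: "qs S (Perm (UNIV :: bool set)) (\<epsilon> ` B)"
      have "comm_group S"
      proof (rule qs_comm[OF group_Perm Sg qb])
        fix x y assume "x \<in> \<epsilon> ` B" "y \<in> \<epsilon> ` B"
        hence "x permutes (UNIV :: bool set)" "y permutes (UNIV :: bool set)"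
          using Not_permutes by (auto simp: \<epsilon>_def permutes_id)
        thus "x \<otimes>\<^bsub>Perm (UNIV :: bool set)\<^esub> y = y \<otimes>\<^bsub>Perm (UNIV :: bool set)\<^esub> x"
          using bool_perm_comm by simp
      qed
      thus False using nab by simp
    qed
  qed
qed




lemma L3:
  assumes finW: "finite W" and deg: "\<And>v. v \<in> W \<Longrightarrow> card {u \<in> W. {u, v} \<in> E} \<le> 2"
    and S: "simple_group S" and nab: "\<not> comm_group S"
  shows "qs S (Perm W) B \<Longrightarrow> (\<And>b. b \<in> B \<Longrightarrow> (\<forall>x\<in>W. \<forall>y\<in>W. {b x, b y} \<in> E \<longleftrightarrow> {x, y} \<in> E) \<and> (\<forall>D\<in>components E W. b ` D \<subseteq> D)) \<Longrightarrow> False"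
proof (induction "card {x \<in> W. \<exists>b\<in>B. b x \<noteq> x}" arbitrary: B rule: less_induct)
  case less
  note q = less.prems(1) and hB = less.prems(2)
  obtain h where B: "subgroup B (Perm W)" and h: "h \<in> hom (pgrp B) S" "h ` B = carrier S"
    using q unfolding qs_def by auto
  have Bp: "\<And>b. b \<in> B \<Longrightarrow> b permutes W" using subgroup_PermD(1)[OF B] by auto
  define M where "M = {x \<in> W. \<exists>b\<in>B. b x \<noteq> x}"
  have finM: "finite M" using finW by (simp add: M_def)
  show False
  proof (cases "M = {}")
    case True
    have "B \<subseteq> {id}"
    proof
      fix b assume b: "b \<in> B"
      have "b = id"
      proof
        fix x show "b x = id x"
        proof (cases "x \<in> W")
          case True thus ?thesis using b \<open>M = {}\<close> by (auto simp: M_def)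
        qed (use permutes_not_in[OF Bp[OF b]] in simp)
      qed
      thus "b \<in> {id}" by simp
    qed
    thus False using qs_trivial[OF S q] by blast
  next
    case False
    then obtain x0 where x0: "x0 \<in> M" by blast
    have x0W: "x0 \<in> W" using x0 by (simp add: M_def)
    define D where "D = conn_rel E W `` {x0}"
    have cp: "comp E W D x0" using finW deg x0W by (unfold_locales) (simp_all add: D_def)
    have Dc: "D \<in> components E W" using x0W by (simp add: D_def components_def quotientI)
    have finD: "finite D" using comp.finD[OF cp] .
    have x0D: "x0 \<in> D" using comp.v0D[OF cp] .
    have DW: "D \<subseteq> W" using comp.D_sub[OF cp] .
    have hom: "rst D \<in> hom (pgrp B) (Perm D)"
    proof (rule rst_hom[OF _ finD])
      show "inj b" if "b \<in> B" for b using permutes_inj[OF Bp[OF that]] .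
      show "b ` D \<subseteq> D" if "b \<in> B" for b using hB[OF that] Dc by blast
    qed
    have "qs S (Perm W) {b \<in> B. rst D b = \<one>\<^bsub>Perm D\<^esub>} \<or> qs S (Perm D) (rst D ` B)"
      by (rule qs_split[OF group_Perm group_Perm S B _ h(2)]) (use h(1) hom in simp_all)
    thus False
    proof
      assume qa: "qs S (Perm W) {b \<in> B. rst D b = \<one>\<^bsub>Perm D\<^esub>}"
      let ?B1 = "{b \<in> B. rst D b = \<one>\<^bsub>Perm D\<^esub>}"
      have sub: "{x \<in> W. \<exists>b\<in>?B1. b x \<noteq> x} \<subseteq> M - {x0}"
      proof
        fix x assume x: "x \<in> {x \<in> W. \<exists>b\<in>?B1. b x \<noteq> x}"
        then obtain b where b: "b \<in> B" "rst D b = id" "b x \<noteq> x" by auto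
        have "x \<noteq> x0"
        proof
          assume "x = x0"
          hence "rst D b x = b x" using x0D by (simp add: rst_def)
          thus False using b by simp
        qed
        thus "x \<in> M - {x0}" using x b by (auto simp: M_def)
      qed
      have "card {x \<in> W. \<exists>b\<in>?B1. b x \<noteq> x} < card M"
      proof (rule le_less_trans[OF card_mono[OF _ sub]])
        show "finite (M - {x0})" using finM by simp
        show "card (M - {x0}) < card M" using card_Diff1_less[OF finM x0] .
      qed
      thus False using less.hyps[OF _ qa] hB unfolding M_def by auto
    next
      assume qb: "qs S (Perm D) (rst D ` B)"
      show False
      proof (rule L4[OF cp S nab qb])
        fix b' assume "b' \<in> rst D ` B"
        then obtain b where b: "b \<in> B" "b' = rst D b" by auto
        have "b' permutes D" using rst_permutes[OF permutes_inj[OF Bp[OF b(1)]] finD] hB[OF b(1)] Dc b(2) by blast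
        moreover have "\<forall>x\<in>D. \<forall>y\<in>D. {b' x, b' y} \<in> E \<longleftrightarrow> {x, y} \<in> E"
        proof (intro ballI)
          fix x y assume xy: "x \<in> D" "y \<in> D"
          have "{b x, b y} \<in> E \<longleftrightarrow> {x, y} \<in> E" using hB[OF b(1)] xy DW by blast
          thus "{b' x, b' y} \<in> E \<longleftrightarrow> {x, y} \<in> E" using xy b(2) by (simp add: rst_def)
        qed
        ultimately show "good E D b'" by (simp add: good_def)
      qed
    qed
  qed
qed




lemma rel_img:
  assumes bp: "b permutes W" and be: "\<forall>x\<in>W. \<forall>y\<in>W. {b x, b y} \<in> E \<longleftrightarrow> {x, y} \<in> E"
    and r: "(x, y) \<in> (Rel E W)\<^sup>*"
  shows "(b x, b y) \<in> (Rel E W)\<^sup>*"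
  using r
proof (induction rule: rtrancl_induct)
  case base thus ?case by simp
next
  case (step y z)
  have yz: "y \<in> W" "z \<in> W" "{y, z} \<in> E" using step(2) by (auto simp: Rel_def)
  hence "(b y, b z) \<in> Rel E W" using be permutes_in_image[OF bp] by (auto simp: Rel_def)
  thus ?case using step(3) by simp
qed

lemma L2:
  assumes finW: "finite W" and fpc: "few_paths_cycles t E W"
    and S: "simple_group S" and nab: "\<not> comm_group S" and q: "qs S (Perm W) B"
    and hB: "\<And>b. b \<in> B \<Longrightarrow> \<forall>x\<in>W. \<forall>y\<in>W. {b x, b y} \<in> E \<longleftrightarrow> {x, y} \<in> E"
  shows "iso_to_subgroup_of_Sym S t"
proof -
  have Sg: "group S" using S by (rule simple_group_group)
  obtain h where B: "subgroup B (Perm W)" and h: "h \<in> hom (pgrp B) S" "h ` B = carrier S"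
    using q unfolding qs_def by auto
  have Bp: "\<And>b. b \<in> B \<Longrightarrow> b permutes W" using subgroup_PermD(1)[OF B] by auto
  define P where "P = components E W"
  have cardP: "card P \<le> t" and deg: "\<And>v. v \<in> W \<Longrightarrow> card {u \<in> W. {u, v} \<in> E} \<le> 2"
    using fpc by (auto simp: few_paths_cycles_def P_def)
  have finP: "finite P" unfolding P_def components_def
    by (rule finite_quotient[OF finW]) (auto simp: conn_rel_def)
  have img: "b ` X \<in> P" if b: "b \<in> B" and X: "X \<in> P" for b X
  proof -
    obtain x where x: "x \<in> W" "X = conn_rel E W `` {x}" using X unfolding P_def components_def by (rule quotientE) auto
    have bp: "b permutes W" using Bp[OF b] .
    have ib: "inv' b \<in> B" using subgroup_PermD(4)[OF B b] .
    have ibp: "inv' b permutes W" using Bp[OF ib] .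
    have bx: "b x \<in> W" using x(1) permutes_in_image[OF bp] by simp
    have "b ` X = conn_rel E W `` {b x}"
    proof
      show "b ` X \<subseteq> conn_rel E W `` {b x}"
      proof
        fix z assume "z \<in> b ` X"
        then obtain y where y: "y \<in> W" "(x, y) \<in> (Rel E W)\<^sup>*" "z = b y" using x by (auto simp: conn_rel_Rel)
        have "(b x, b y) \<in> (Rel E W)\<^sup>*" using rel_img[OF bp hB[OF b] y(2)] .
        moreover have "b y \<in> W" using y(1) permutes_in_image[OF bp] by simp
        ultimately show "z \<in> conn_rel E W `` {b x}" using bx y(3) by (simp add: conn_rel_Rel)
      qed
      show "conn_rel E W `` {b x} \<subseteq> b ` X"
      proof
        fix z assume "z \<in> conn_rel E W `` {b x}"
        hence z: "z \<in> W" "(b x, z) \<in> (Rel E W)\<^sup>*" by (simp_all add: conn_rel_Rel)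
        have "(inv' b (b x), inv' b z) \<in> (Rel E W)\<^sup>*" using rel_img[OF ibp hB[OF ib] z(2)] .
        hence "(x, inv' b z) \<in> (Rel E W)\<^sup>*" using permutes_inverses(2)[OF bp] by simp
        moreover have "inv' b z \<in> W" using z(1) permutes_in_image[OF ibp] by simp
        ultimately have "inv' b z \<in> X" using x by (simp add: conn_rel_Rel)
        moreover have "z = b (inv' b z)" using permutes_inverses(1)[OF bp] by simp
        ultimately show "z \<in> b ` X" by blast
      qed
    qed
    thus ?thesis using bx unfolding P_def components_def by (simp add: quotientI)
  qed
  have hom: "sact P \<in> hom (pgrp B) (Perm P)"
  proof (rule sact_hom[OF _ finP])
    show "inj b" if "b \<in> B" for b using permutes_inj[OF Bp[OF that]] .
    show "b ` X \<in> P" if "b \<in> B" "X \<in> P" for b X using img[OF that] .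
  qed
  have "qs S (Perm W) {b \<in> B. sact P b = \<one>\<^bsub>Perm P\<^esub>} \<or> qs S (Perm P) (sact P ` B)"
    by (rule qs_split[OF group_Perm group_Perm S B _ h(2)]) (use h(1) hom in simp_all)
  thus ?thesis
  proof
    assume qa: "qs S (Perm W) {b \<in> B. sact P b = \<one>\<^bsub>Perm P\<^esub>}"
    show ?thesis
    proof (rule FalseE, rule L3[OF finW deg S nab qa])
      fix b assume b: "b \<in> {b \<in> B. sact P b = \<one>\<^bsub>Perm P\<^esub>}"
      have "b ` D \<subseteq> D" if "D \<in> components E W" for D
      proof -
        have "sact P b D = D" using b by simp
        thus ?thesis using that by (simp add: sact_def P_def)
      qed
      thus "(\<forall>x\<in>W. \<forall>y\<in>W. {b x, b y} \<in> E \<longleftrightarrow> {x, y} \<in> E) \<and> (\<forall>D\<in>components E W. b ` D \<subseteq> D)"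
        using hB b by auto
    qed
  next
    assume qb: "qs S (Perm P) (sact P ` B)"
    obtain A' where "qs S (sym_group (card P)) A'" using qs_transport[OF finP Sg qb] by blast
    hence "iso_to_subgroup_of_Sym S (card P)" using SM[OF S nab] by blast
    thus ?thesis using emb_mono cardP by blast
  qed
qed




lemma L1:
  assumes cg: "colored_graph V E c k" and cb: "circle_bounded t V E c k"
    and S: "simple_group S" and nab: "\<not> comm_group S"
  shows "qs S (Perm V) A \<Longrightarrow> A \<subseteq> automorphisms V E c \<Longrightarrow> iso_to_subgroup_of_Sym S t"
proof (induction "card {x \<in> V. \<exists>a\<in>A. a x \<noteq> x}" arbitrary: A rule: less_induct)
  case less
  note q = less.prems(1) and Aaut = less.prems(2)
  have finV: "finite V" using cg by (simp add: colored_graph_def)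
  have cV: "\<And>v. v \<in> V \<Longrightarrow> c v \<in> {1..k}" using cg by (simp add: colored_graph_def)
  obtain h where A: "subgroup A (Perm V)" and h: "h \<in> hom (pgrp A) S" "h ` A = carrier S"
    using q unfolding qs_def by auto
  have Ap: "\<And>a. a \<in> A \<Longrightarrow> a permutes V" using subgroup_PermD(1)[OF A] by auto
  have aE: "\<And>a u v. a \<in> A \<Longrightarrow> u \<in> V \<Longrightarrow> v \<in> V \<Longrightarrow> {a u, a v} \<in> E \<longleftrightarrow> {u, v} \<in> E"
    using Aaut by (auto simp: automorphisms_def)
  have ac: "\<And>a v. a \<in> A \<Longrightarrow> v \<in> V \<Longrightarrow> c (a v) = c v"
    using Aaut by (auto simp: automorphisms_def)
  define M where "M = {x \<in> V. \<exists>a\<in>A. a x \<noteq> x}"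
  have finM: "finite M" using finV by (simp add: M_def)
  show ?case
  proof (cases "M = {}")
    case True
    have "A \<subseteq> {id}"
    proof
      fix b assume b: "b \<in> A"
      have "b = id"
      proof
        fix x show "b x = id x"
        proof (cases "x \<in> V")
          case True thus ?thesis using b \<open>M = {}\<close> by (auto simp: M_def)
        qed (use permutes_not_in[OF Ap[OF b]] in simp)
      qed
      thus "b \<in> {id}" by simp
    qed
    thus ?thesis using qs_trivial[OF S q] by blast
  next
    case False
    define i where "i = Min (c ` M)"
    have "i \<in> c ` M" unfolding i_def using finM False by (intro Min_in) auto
    then obtain x0 where x0: "x0 \<in> M" "c x0 = i" by auto
    have x0V: "x0 \<in> V" using x0 by (simp add: M_def)
    have fixb: "a y = y" if "a \<in> A" "y \<in> V" "c y < i" for a y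
    proof (rule ccontr)
      assume "a y \<noteq> y"
      hence "y \<in> M" using that by (auto simp: M_def)
      hence "i \<le> c y" unfolding i_def using finM by (intro Min_le) auto
      thus False using that by simp
    qed
    define X where "X = nbhd V E x0 \<inter> color_below V c i"
    define C where "C = GiX V E c i X"
    have CV: "C \<subseteq> V" by (auto simp: C_def GiX_def color_class_def)
    have finC: "finite C" using CV finV finite_subset by auto
    have x0C: "x0 \<in> C" using x0V x0 by (simp add: C_def GiX_def color_class_def X_def)
    have aC: "a ` C \<subseteq> C" if a: "a \<in> A" for a
    proof
      fix z assume "z \<in> a ` C"
      then obtain y where y: "y \<in> C" "z = a y" by auto
      have yV: "y \<in> V" and cy: "c y = i" and yX: "nbhd V E y \<inter> color_below V c i = X"
        using y(1) by (auto simp: C_def GiX_def color_class_def)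
      have ayV: "a y \<in> V" using yV permutes_in_image[OF Ap[OF a]] by simp
      have "nbhd V E (a y) \<inter> color_below V c i = nbhd V E y \<inter> color_below V c i"
      proof (rule Set.set_eqI)
        fix w
        show "w \<in> nbhd V E (a y) \<inter> color_below V c i \<longleftrightarrow> w \<in> nbhd V E y \<inter> color_below V c i"
        proof (cases "w \<in> V \<and> c w < i")
          case True
          hence "a w = w" using fixb a by simp
          hence "{w, a y} \<in> E \<longleftrightarrow> {w, y} \<in> E" using aE[OF a, of w y] True yV by simp
          thus ?thesis using True by (simp add: nbhd_def color_below_def)
        next
          case False
          thus ?thesis by (auto simp: nbhd_def color_below_def)
        qed
      qed
      hence "a y \<in> C" using ayV ac[OF a yV] cy yX by (simp add: C_def GiX_def color_class_def)
      thus "z \<in> C" using y by simp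
    qed
    have hom: "rst C \<in> hom (pgrp A) (Perm C)"
    proof (rule rst_hom[OF _ finC])
      show "inj b" if "b \<in> A" for b using permutes_inj[OF Ap[OF that]] .
      show "b ` C \<subseteq> C" if "b \<in> A" for b using aC[OF that] .
    qed
    have "qs S (Perm V) {b \<in> A. rst C b = \<one>\<^bsub>Perm C\<^esub>} \<or> qs S (Perm C) (rst C ` A)"
      by (rule qs_split[OF group_Perm group_Perm S A _ h(2)]) (use h(1) hom in simp_all)
    thus ?thesis
    proof
      assume qa: "qs S (Perm V) {b \<in> A. rst C b = \<one>\<^bsub>Perm C\<^esub>}"
      let ?A1 = "{b \<in> A. rst C b = \<one>\<^bsub>Perm C\<^esub>}"
      have sub: "{x \<in> V. \<exists>b\<in>?A1. b x \<noteq> x} \<subseteq> M - {x0}"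
      proof
        fix x assume x: "x \<in> {x \<in> V. \<exists>b\<in>?A1. b x \<noteq> x}"
        then obtain b where b: "b \<in> A" "rst C b = id" "b x \<noteq> x" by auto
        have "x \<noteq> x0"
        proof
          assume "x = x0"
          hence "rst C b x = b x" using x0C by (simp add: rst_def)
          thus False using b by simp
        qed
        thus "x \<in> M - {x0}" using x b by (auto simp: M_def)
      qed
      have "card {x \<in> V. \<exists>b\<in>?A1. b x \<noteq> x} < card M"
      proof (rule le_less_trans[OF card_mono[OF _ sub]])
        show "finite (M - {x0})" using finM by simp
        show "card (M - {x0}) < card M" using card_Diff1_less[OF finM x0(1)] .
      qed
      moreover have "?A1 \<subseteq> automorphisms V E c" using Aaut by auto
      ultimately show ?thesis using less.hyps[OF _ qa] unfolding M_def by blast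
    next
      assume qb: "qs S (Perm C) (rst C ` A)"
      have "few_paths_cycles t E C"
      proof -
        have "i \<in> {1..k}" using cV[OF x0V] x0 by simp
        moreover have "X \<subseteq> color_below V c i" by (simp add: X_def)
        ultimately show ?thesis using cb unfolding circle_bounded_def C_def by blast
      qed
      thus ?thesis
      proof (rule L2[OF finC _ S nab qb])
        fix b' assume "b' \<in> rst C ` A"
        then obtain b where b: "b \<in> A" "b' = rst C b" by auto
        show "\<forall>x\<in>C. \<forall>y\<in>C. {b' x, b' y} \<in> E \<longleftrightarrow> {x, y} \<in> E"
        proof (intro ballI)
          fix x y assume xy: "x \<in> C" "y \<in> C"
          have "{b x, b y} \<in> E \<longleftrightarrow> {x, y} \<in> E" using aE[OF b(1)] xy CV by blast
          thus "{b' x, b' y} \<in> E \<longleftrightarrow> {x, y} \<in> E" using xy b(2) by (simp add: rst_def)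
        qed
      qed
    qed
  qed
qed

lemma aut_subgroup:
  assumes "finite V"
  shows "subgroup (automorphisms V E c) (Perm V)"
proof (rule subgroup_PermI)
  show "automorphisms V E c \<subseteq> {p. p permutes V}" by (auto simp: automorphisms_def)
  show "id \<in> automorphisms V E c" by (simp add: automorphisms_def permutes_id)
  show "p \<circ> q \<in> automorphisms V E c" if "p \<in> automorphisms V E c" "q \<in> automorphisms V E c" for p q
  proof -
    have p: "p permutes V" "\<And>u v. u \<in> V \<Longrightarrow> v \<in> V \<Longrightarrow> {p u, p v} \<in> E \<longleftrightarrow> {u, v} \<in> E" "\<And>v. v \<in> V \<Longrightarrow> c (p v) = c v"
      and q: "q permutes V" "\<And>u v. u \<in> V \<Longrightarrow> v \<in> V \<Longrightarrow> {q u, q v} \<in> E \<longleftrightarrow> {u, v} \<in> E" "\<And>v. v \<in> V \<Longrightarrow> c (q v) = c v"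
      using that by (auto simp: automorphisms_def)
    have qV: "\<And>v. v \<in> V \<Longrightarrow> q v \<in> V" using permutes_in_image[OF q(1)] by simp
    show ?thesis unfolding automorphisms_def
      using permutes_compose[OF q(1) p(1)] p(2)[OF qV qV] q(2) p(3)[OF qV] q(3) by simp
  qed
  show "inv' p \<in> automorphisms V E c" if "p \<in> automorphisms V E c" for p
  proof -
    have p: "p permutes V" "\<And>u v. u \<in> V \<Longrightarrow> v \<in> V \<Longrightarrow> {p u, p v} \<in> E \<longleftrightarrow> {u, v} \<in> E" "\<And>v. v \<in> V \<Longrightarrow> c (p v) = c v"
      using that by (auto simp: automorphisms_def)
    have iV: "\<And>v. v \<in> V \<Longrightarrow> inv' p v \<in> V" using permutes_in_image[OF permutes_inv[OF p(1)]] by simp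
    have e: "{inv' p u, inv' p v} \<in> E \<longleftrightarrow> {u, v} \<in> E" if "u \<in> V" "v \<in> V" for u v
      using p(2)[OF iV[OF that(1)] iV[OF that(2)]] permutes_inverses(1)[OF p(1)] by simp
    have cc: "c (inv' p v) = c v" if "v \<in> V" for v
      using p(3)[OF iV[OF that]] permutes_inverses(1)[OF p(1)] by simp
    show ?thesis unfolding automorphisms_def using permutes_inv[OF p(1)] e cc by simp
  qed
qed

theorem mainTheorem2:
  fixes t k :: nat and V :: "'a set" and E :: "'a set set" and c :: "'a \<Rightarrow> nat"
  assumes "colored_graph V E c k"
    and "circle_bounded t V E c k"
  shows "Gamma t (Aut V E c)"
proof -
  have finV: "finite V" using assms(1) by (simp add: colored_graph_def)
  have sub: "subgroup (automorphisms V E c) (Perm V)" using aut_subgroup[OF finV] .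
  have AutP: "Aut V E c = (Perm V)\<lparr>carrier := automorphisms V E c\<rparr>" by (simp add: Aut_def pgrp_def)
  have grp: "group (Aut V E c)" using group_pgrp[OF sub] AutP by simp
  have fin: "finite (carrier (Aut V E c))"
  proof -
    have "carrier (Aut V E c) \<subseteq> {p. p permutes V}" by (auto simp: Aut_def automorphisms_def)
    thus ?thesis using finite_permutations[OF finV] finite_subset by blast
  qed
  have "iso_to_subgroup_of_Sym F t" if F: "F \<in> composition_factors (Aut V E c)" and nc: "\<not> comm_group F" for F
  proof -
    obtain Hs i where cs: "composition_series (Aut V E c) Hs" and i: "Suc i < length Hs"
      and Fe: "F = (Aut V E c)\<lparr>carrier := Hs ! Suc i\<rparr> Mod (Hs ! i)"
      using F unfolding composition_factors_def by blast
    let ?H = "Hs ! Suc i"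
    have Hin: "?H \<in> set Hs" using i by simp
    have subH: "subgroup ?H (Aut V E c)" using cs Hin by (simp add: composition_series_def)
    have nrm: "Hs ! i \<lhd> (Aut V E c)\<lparr>carrier := ?H\<rparr>" and simp: "simple_group F"
      using cs i Fe by (simp_all add: composition_series_def)
    have AH: "(Aut V E c)\<lparr>carrier := ?H\<rparr> = pgrp ?H" by (simp add: Aut_def pgrp_def)
    have subHP: "subgroup ?H (Perm V)"
      using group.incl_subgroup[OF group_Perm sub] subH AutP by simp
    have Haut: "?H \<subseteq> automorphisms V E c" using subgroup.subset[OF subH] by (simp add: Aut_def)
    have nrm': "Hs ! i \<lhd> pgrp ?H" using nrm AH by simp
    have hhom: "(\<lambda>a. Hs ! i #>\<^bsub>pgrp ?H\<^esub> a) \<in> hom (pgrp ?H) (pgrp ?H Mod Hs ! i)"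
      using normal.r_coset_hom_Mod[OF nrm'] .
    have honto: "(\<lambda>a. Hs ! i #>\<^bsub>pgrp ?H\<^esub> a) ` ?H = carrier (pgrp ?H Mod Hs ! i)"
      by (auto simp: FactGroup_def RCOSETS_def)
    have FM: "F = pgrp ?H Mod Hs ! i" using Fe AH by simp
    have "qs F (Perm V) ?H" unfolding qs_def using subHP hhom honto FM by auto
    thus ?thesis using L1[OF assms simp nc _ Haut] by blast
  qed
  thus ?thesis unfolding Gamma_def using grp fin by blast
qed



end
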